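(* Let $F_1,\dots,F_{m+1}$ be scalar (non-linear) differential operators in $m$ unknown functions of orders $l(1),\dots,l(m+1)$, belonging to a system $\mathcal E$ given by operators $F_1,\dots,F_r$, and put $l=\sum_{i=1}^{m+1}l(i)$. Define $$[F_1,\dots,F_{m+1}]=\frac1{m!}\sum_{\zeta\in S_{m+1},\ \nu\in S_m}\frac{\operatorname{sgn}(\zeta)}{\operatorname{sgn}(\nu)}\sum_{\substack{\tau_1,\dots,\tau_m\\|\tau_i|=l(\zeta(i))}}\prod_{j=1}^m\frac{\partial F_{\zeta(j)}}{\partial p^{\nu(j)}_{\tau_j}}\;D_{\tau_1+\dots+\tau_m}F_{\zeta(m+1)}.$$ Then $[F_1,\dots,F_{m+1}]\equiv\{F_1,\dots,F_{m+1}\}\mod\mathcal J_{l-1}(\mathcal E)$.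
   Context: Jet coordinates $(x^i,p^j_\sigma)$, $1\le i\le n$, $1\le j\le m$; total derivatives $D_i=\partial_{x^i}+\sum p^j_{\sigma+1_i}\partial_{p^j_\sigma}$, $D_\tau=D_1^{\tau_1}\cdots D_n^{\tau_n}$. A scalar non-linear operator of order $l$ is a smooth function on $J^l$. Linearization: $\ell_j(F)=\sum_\sigma\frac{\partial F}{\partial p^j_\sigma}D_\sigma$. Multi-bracket: $$\{F_1,\dots,F_{m+1}\}=\frac1{m!}\sum_{\alpha\in S_m,\beta\in S_{m+1}}(-1)^\alpha(-1)^\beta\ell_{\alpha(1)}(F_{\beta(1)})\circ\cdots\circ\ell_{\alpha(m)}(F_{\beta(m)})(F_{\beta(m+1)}).$$ $\mathcal J_s(\mathcal E)$ is the set of functions $\sum a_{i,\tau}D_\tau F_i$ (over $1\le i\le r$ and $\tau$ with $\operatorname{ord}F_i+|\tau|\le s$) with smooth coefficients $a_{i,\tau}$ on the jet space. *)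

theory Defs
  imports "HOL-Analysis.Analysis"
begin

text \<open>Jet coordinates: X i is x^(i+1) (0-based, i < n); P j s is p^(j+1)_s
  where s :: nat => nat is a multi-index (supported in {0..<n}), j < m.\<close>

datatype coord = X nat | P nat "nat \<Rightarrow> nat"

type_synonym jetpt = "coord \<Rightarrow> real"
type_synonym jetfun = "jetpt \<Rightarrow> real"

definition midx :: "nat \<Rightarrow> (nat \<Rightarrow> nat) \<Rightarrow> bool" where
  "midx n s \<longleftrightarrow> (\<forall>i\<ge>n. s i = 0)"

definition mabs :: "nat \<Rightarrow> (nat \<Rightarrow> nat) \<Rightarrow> nat" where
  "mabs n s = (\<Sum>i<n. s i)"

definition valid_coord :: "nat \<Rightarrow> nat \<Rightarrow> nat \<Rightarrow> coord \<Rightarrow> bool" where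
  "valid_coord n m l c = (case c of X i \<Rightarrow> i < n
                         | P j s \<Rightarrow> j < m \<and> midx n s \<and> mabs n s \<le> l)"

text \<open>F is a function on J^l: it depends only on the coordinates of J^l.\<close>
definition has_order_le :: "nat \<Rightarrow> nat \<Rightarrow> nat \<Rightarrow> jetfun \<Rightarrow> bool" where
  "has_order_le n m l F \<longleftrightarrow>
     (\<forall>u v. (\<forall>c. valid_coord n m l c \<longrightarrow> u c = v c) \<longrightarrow> F u = F v)"

definition jet_order :: "nat \<Rightarrow> nat \<Rightarrow> jetfun \<Rightarrow> nat" where
  "jet_order n m F = (LEAST l. has_order_le n m l F)"

definition pd :: "coord \<Rightarrow> jetfun \<Rightarrow> jetfun" where
  "pd c F = (\<lambda>u. deriv (\<lambda>t. F (u(c := t))) (u c))"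

definition pds :: "coord list \<Rightarrow> jetfun \<Rightarrow> jetfun" where
  "pds cs F = foldr pd cs F"

definition smooth_jet :: "nat \<Rightarrow> nat \<Rightarrow> jetfun \<Rightarrow> bool" where
  "smooth_jet n m F \<longleftrightarrow> (\<exists>l. has_order_le n m l F)
     \<and> (\<forall>cs c u. (\<lambda>t. pds cs F (u(c := t))) differentiable (at (u c)))
     \<and> (\<forall>cs. continuous_on UNIV (pds cs F))"

text \<open>Total derivative D_i (0-based i).\<close>
definition Dtot :: "nat \<Rightarrow> nat \<Rightarrow> nat \<Rightarrow> jetfun \<Rightarrow> jetfun" where
  "Dtot n m i F = (\<lambda>u. pd (X i) F u +
     (\<Sum>(j, s) \<in> {(j, s). j < m \<and> midx n s \<and> mabs n s \<le> jet_order n m F}.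
         u (P j (s(i := Suc (s i)))) * pd (P j s) F u))"

definition Dmulti :: "nat \<Rightarrow> nat \<Rightarrow> (nat \<Rightarrow> nat) \<Rightarrow> jetfun \<Rightarrow> jetfun" where
  "Dmulti n m t F = foldr (\<lambda>i G. (Dtot n m i ^^ t i) G) [0..<n] F"

definition ell :: "nat \<Rightarrow> nat \<Rightarrow> nat \<Rightarrow> jetfun \<Rightarrow> jetfun \<Rightarrow> jetfun" where
  "ell n m j F G = (\<lambda>u. \<Sum>s \<in> {s. midx n s \<and> mabs n s \<le> jet_order n m F}.
                          pd (P j s) F u * Dmulti n m s G u)"

text \<open>Multi-bracket {F_1,...,F_{m+1}} (F indexed 0..m).\<close>
definition multibracket :: "nat \<Rightarrow> nat \<Rightarrow> (nat \<Rightarrow> jetfun) \<Rightarrow> jetfun" where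
  "multibracket n m F = (\<lambda>u. (1 / fact m) *
     (\<Sum>\<alpha> \<in> {\<alpha>. \<alpha> permutes {..<m}}. \<Sum>\<beta> \<in> {\<beta>. \<beta> permutes {..<Suc m}}.
        of_int (sign \<alpha> * sign \<beta>) *
        foldr (\<lambda>k G. ell n m (\<alpha> k) (F (\<beta> k)) G) [0..<m] (F (\<beta> m)) u))"

definition lead_bracket :: "nat \<Rightarrow> nat \<Rightarrow> (nat \<Rightarrow> jetfun) \<Rightarrow> jetfun" where
  "lead_bracket n m F = (\<lambda>u. (1 / fact m) *
     (\<Sum>\<zeta> \<in> {\<zeta>. \<zeta> permutes {..<Suc m}}. \<Sum>\<nu> \<in> {\<nu>. \<nu> permutes {..<m}}.
        (of_int (sign \<zeta>) / of_int (sign \<nu>)) *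
        (\<Sum>ts \<in> PiE {..<m} (\<lambda>k. {s. midx n s \<and> mabs n s = jet_order n m (F (\<zeta> k))}).
           (\<Prod>j<m. pd (P (\<nu> j) (ts j)) (F (\<zeta> j)) u) *
           Dmulti n m (\<lambda>i. \<Sum>k<m. ts k i) (F (\<zeta> m)) u)))"

text \<open>J_s(E) for the system E given by F 0, ..., F (r-1); s is an integer so that
  J_{-1} = {0}.\<close>
definition Jideal :: "nat \<Rightarrow> nat \<Rightarrow> nat \<Rightarrow> (nat \<Rightarrow> jetfun) \<Rightarrow> int \<Rightarrow> jetfun set" where
  "Jideal n m r F s = {G. \<exists>a. (\<forall>i t. smooth_jet n m (a i t)) \<and>
     G = (\<lambda>u. \<Sum>i<r. \<Sum>t \<in> {t. midx n t \<and> int (jet_order n m (F i) + mabs n t) \<le> s}.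
                a i t u * Dmulti n m t (F i) u)}"

end

theory Submission
  imports Defs
begin


definition ldiff :: "jetfun \<Rightarrow> bool" where
  "ldiff g \<longleftrightarrow> (\<forall>c u. (\<lambda>t. g (u(c := t))) differentiable (at (u c)))"

lemma ldiff_D: "ldiff g \<Longrightarrow> ((\<lambda>t. g (u(c := t))) has_real_derivative pd c g u) (at (u c))"
  unfolding ldiff_def pd_def using DERIV_deriv_iff_real_differentiable by blast

lemma ldiff_D': "ldiff g \<Longrightarrow> ((\<lambda>t. g (u(c := t))) has_real_derivative pd c g (u(c:=x))) (at x)"
  using ldiff_D[of g "u(c:=x)" c] by simp

lemma ldiff_I: "(\<And>c u. \<exists>D. ((\<lambda>t. h (u(c := t))) has_real_derivative D) (at (u c))) \<Longrightarrow> ldiff h"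
  unfolding ldiff_def real_differentiable_def by blast

lemma pd_eqI: "((\<lambda>t. h (u(c:=t))) has_real_derivative D) (at (u c)) \<Longrightarrow> pd c h u = D"
  by (simp add: pd_def DERIV_imp_deriv)

lemma pd_add: "ldiff f \<Longrightarrow> ldiff g \<Longrightarrow> pd c (\<lambda>u. f u + g u) = (\<lambda>u. pd c f u + pd c g u)"
  by (rule ext, rule pd_eqI, intro DERIV_add ldiff_D)

lemma pd_mult: "ldiff f \<Longrightarrow> ldiff g \<Longrightarrow> pd c (\<lambda>u. f u * g u) = (\<lambda>u. pd c f u * g u + f u * pd c g u)"
  by (rule ext, rule pd_eqI, rule DERIV_mult[THEN DERIV_cong], (rule ldiff_D, assumption)+, simp)

lemma pd_const: "pd c (\<lambda>u. a) = (\<lambda>u. 0)"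
  by (rule ext, rule pd_eqI, simp)

lemma pd_coord: "pd c (\<lambda>u. u c') = (\<lambda>u. if c = c' then 1 else 0)"
proof (rule ext, rule pd_eqI)
  fix u
  show "((\<lambda>t. (u(c:=t)) c') has_real_derivative (if c = c' then 1 else 0)) (at (u c))"
    by (cases "c = c'") auto
qed

lemma ldiff_add: assumes "ldiff f" "ldiff g" shows "ldiff (\<lambda>u. f u + g u)"
proof (rule ldiff_I)
  fix c u show "\<exists>D. ((\<lambda>t. f (u(c:=t)) + g (u(c:=t))) has_real_derivative D) (at (u c))"
    using DERIV_add[OF ldiff_D[OF assms(1), of u c] ldiff_D[OF assms(2), of u c]] by blast
qed

lemma ldiff_mult: assumes "ldiff f" "ldiff g" shows "ldiff (\<lambda>u. f u * g u)"
proof (rule ldiff_I)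
  fix c u show "\<exists>D. ((\<lambda>t. f (u(c:=t)) * g (u(c:=t))) has_real_derivative D) (at (u c))"
    using DERIV_mult[OF ldiff_D[OF assms(1), of u c] ldiff_D[OF assms(2), of u c]] by blast
qed

lemma ldiff_const: "ldiff (\<lambda>u. a)"
  by (rule ldiff_I, rule exI, rule DERIV_const)

lemma ldiff_coord: "ldiff (\<lambda>u. u c')"
proof (rule ldiff_I)
  fix c u
  show "\<exists>D. ((\<lambda>t. (u(c:=t)) c') has_real_derivative D) (at (u c))"
  proof (cases "c = c'")
    case True then show ?thesis by (auto intro!: exI[of _ 1] DERIV_ident)
  next
    case False then show ?thesis by (auto intro!: exI[of _ 0])
  qed
qed

definition Pk :: "nat \<Rightarrow> jetfun \<Rightarrow> bool" where
  "Pk k h \<longleftrightarrow> (\<forall>cs. length cs \<le> k \<longrightarrow> ldiff (pds cs h) \<and> continuous_on UNIV (pds cs h))"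

definition sm :: "jetfun \<Rightarrow> bool" where
  "sm h \<longleftrightarrow> (\<forall>cs. ldiff (pds cs h) \<and> continuous_on UNIV (pds cs h))"

lemma sm_Pk: "sm h \<longleftrightarrow> (\<forall>k. Pk k h)"
  unfolding sm_def Pk_def by blast

lemma pds_Nil[simp]: "pds [] h = h" by (simp add: pds_def)
lemma pds_Cons[simp]: "pds (c#cs) h = pd c (pds cs h)" by (simp add: pds_def)
lemma pds_snoc: "pds (cs @ [c]) h = pds cs (pd c h)" by (simp add: pds_def)

lemma Pk_mono: "Pk k' h \<Longrightarrow> k \<le> k' \<Longrightarrow> Pk k h"
  unfolding Pk_def by auto

lemma Pk_ldiff: "Pk k h \<Longrightarrow> ldiff h"
  unfolding Pk_def by (metis le0 list.size(3) pds_Nil)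

lemma Pk_cont: "Pk k h \<Longrightarrow> continuous_on UNIV h"
  unfolding Pk_def by (metis le0 list.size(3) pds_Nil)

lemma pds_add: "Pk k f \<Longrightarrow> Pk k g \<Longrightarrow> length cs \<le> k \<Longrightarrow>
   pds cs (\<lambda>u. f u + g u) = (\<lambda>u. pds cs f u + pds cs g u)"
proof (induction cs)
  case Nil then show ?case by simp
next
  case (Cons c cs)
  then have "length cs \<le> k" by simp
  then have "ldiff (pds cs f)" "ldiff (pds cs g)" using Cons.prems unfolding Pk_def by auto
  then show ?case using Cons \<open>length cs \<le> k\<close> by (simp add: pd_add)
qed

lemma Pk_add: "Pk k f \<Longrightarrow> Pk k g \<Longrightarrow> Pk k (\<lambda>u. f u + g u)"
  unfolding Pk_def[of k "\<lambda>u. f u + g u"]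
  by (auto simp: pds_add intro!: ldiff_add continuous_on_add) (auto simp: Pk_def)

lemma Pk_pd: "Pk (Suc k) f \<Longrightarrow> Pk k (pd c f)"
  unfolding Pk_def by (metis pds_snoc length_append_singleton not_less_eq_eq)

lemma Pk_mult: "Pk k f \<Longrightarrow> Pk k g \<Longrightarrow> Pk k (\<lambda>u. f u * g u)"
proof (induction k arbitrary: f g)
  case 0
  then have "ldiff (\<lambda>u. f u * g u) \<and> continuous_on UNIV (\<lambda>u. f u * g u)"
    using ldiff_mult[OF Pk_ldiff[OF 0(1)] Pk_ldiff[OF 0(2)]]
      continuous_on_mult[OF Pk_cont[OF 0(1)] Pk_cont[OF 0(2)]] by simp
  then show ?case unfolding Pk_def by auto
next
  case (Suc k)
  show ?case unfolding Pk_def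
  proof (intro allI impI)
    fix cs :: "coord list" assume len: "length cs \<le> Suc k"
    show "ldiff (pds cs (\<lambda>u. f u * g u)) \<and> continuous_on UNIV (pds cs (\<lambda>u. f u * g u))"
    proof (cases cs rule: rev_exhaust)
      case Nil
      then show ?thesis
        using ldiff_mult[OF Pk_ldiff[OF Suc.prems(1)] Pk_ldiff[OF Suc.prems(2)]]
          continuous_on_mult[OF Pk_cont[OF Suc.prems(1)] Pk_cont[OF Suc.prems(2)]] by simp
    next
      case (snoc cs' c)
      have l: "length cs' \<le> k" using len snoc by simp
      have e: "pds cs (\<lambda>u. f u * g u) = pds cs' (\<lambda>u. pd c f u * g u + f u * pd c g u)"
        using snoc pd_mult[OF Pk_ldiff[OF Suc.prems(1)] Pk_ldiff[OF Suc.prems(2)]]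
        by (simp add: pds_snoc)
      have a1: "Pk k (pd c f)" "Pk k (pd c g)" using Suc.prems by (auto intro: Pk_pd)
      have a2: "Pk k f" "Pk k g" using Suc.prems by (auto intro: Pk_mono)
      have "Pk k (\<lambda>u. pd c f u * g u + f u * pd c g u)"
        by (rule Pk_add; rule Suc.IH) (use a1 a2 in auto)
      then show ?thesis using e l unfolding Pk_def by auto
    qed
  qed
qed

lemma pds_const: "\<exists>b. pds cs (\<lambda>u. a) = (\<lambda>u. b)"
  by (induction cs) (auto simp: pd_const)

lemma pds_coord: "pds cs (\<lambda>u. u c) = (\<lambda>u. u c) \<or> (\<exists>b. pds cs (\<lambda>u. u c) = (\<lambda>u. b))"
  by (induction cs) (auto simp: pd_coord pd_const)

lemma sm_const: "sm (\<lambda>u. a)"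
  unfolding sm_def
proof
  fix cs obtain b where "pds cs (\<lambda>u. a) = (\<lambda>u. b)" using pds_const by blast
  then show "ldiff (pds cs (\<lambda>u. a)) \<and> continuous_on UNIV (pds cs (\<lambda>u. a))"
    by (simp add: ldiff_const)
qed

lemma sm_coord: "sm (\<lambda>u. u c)"
  unfolding sm_def
proof
  fix cs
  show "ldiff (pds cs (\<lambda>u. u c)) \<and> continuous_on UNIV (pds cs (\<lambda>u. u c))"
  proof (cases "pds cs (\<lambda>u. u c) = (\<lambda>u. u c)")
    case True then show ?thesis by (simp add: ldiff_coord)
  next
    case False
    then obtain b where "pds cs (\<lambda>u. u c) = (\<lambda>u. b)" using pds_coord by blast
    then show ?thesis by (simp add: ldiff_const)
  qed
qed

lemma sm_add: "sm f \<Longrightarrow> sm g \<Longrightarrow> sm (\<lambda>u. f u + g u)"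
  by (simp add: sm_Pk Pk_add)

lemma sm_mult: "sm f \<Longrightarrow> sm g \<Longrightarrow> sm (\<lambda>u. f u * g u)"
  by (simp add: sm_Pk Pk_mult)

lemma sm_pd: "sm f \<Longrightarrow> sm (pd c f)"
  by (simp add: sm_Pk Pk_pd)

lemma sm_ldiff: "sm f \<Longrightarrow> ldiff f"
  by (metis sm_def pds_Nil)

lemma sm_cont: "sm f \<Longrightarrow> continuous_on UNIV f"
  by (metis sm_def pds_Nil)

lemma sm_sum: "finite S \<Longrightarrow> (\<And>x. x \<in> S \<Longrightarrow> sm (f x)) \<Longrightarrow> sm (\<lambda>u. \<Sum>x\<in>S. f x u)"
  by (induction S rule: finite_induct) (auto intro: sm_add sm_const)

lemma sm_prod: "finite S \<Longrightarrow> (\<And>x. x \<in> S \<Longrightarrow> sm (f x)) \<Longrightarrow> sm (\<lambda>u. \<Prod>x\<in>S. f x u)"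
  by (induction S rule: finite_induct) (auto intro: sm_mult sm_const)

lemma ldiff_sum: "finite S \<Longrightarrow> (\<And>x. x \<in> S \<Longrightarrow> ldiff (f x)) \<Longrightarrow> ldiff (\<lambda>u. \<Sum>x\<in>S. f x u)"
  by (induction S rule: finite_induct) (auto intro: ldiff_add ldiff_const)

lemma pd_sum: "finite S \<Longrightarrow> (\<And>x. x \<in> S \<Longrightarrow> ldiff (f x)) \<Longrightarrow>
   pd c (\<lambda>u. \<Sum>x\<in>S. f x u) = (\<lambda>u. \<Sum>x\<in>S. pd c (f x) u)"
proof (induction S rule: finite_induct)
  case empty then show ?case by (simp add: pd_const)
next
  case (insert x S)
  have "pd c (\<lambda>u. \<Sum>x\<in>insert x S. f x u) = pd c (\<lambda>u. f x u + (\<Sum>x\<in>S. f x u))"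
    by (simp only: sum.insert[OF insert(1,2)])
  also have "\<dots> = (\<lambda>u. pd c (f x) u + pd c (\<lambda>u. \<Sum>x\<in>S. f x u) u)"
  proof -
    have ldx: "ldiff (f x)" using insert.prems by simp
    have lds: "ldiff (\<lambda>u. \<Sum>x\<in>S. f x u)" by (rule ldiff_sum) (use insert in auto)
    show ?thesis using pd_add[OF ldx lds] .
  qed
  also have "\<dots> = (\<lambda>u. \<Sum>x\<in>insert x S. pd c (f x) u)"
    using insert.IH insert.prems by (simp only: sum.insert[OF insert(1,2)]) simp
  finally show ?case .
qed


lemma valid_mono: "valid_coord n m l c \<Longrightarrow> l \<le> l' \<Longrightarrow> valid_coord n m l' c"
  by (auto simp: valid_coord_def split: coord.splits)

lemma hol_mono: "has_order_le n m l F \<Longrightarrow> l \<le> l' \<Longrightarrow> has_order_le n m l' F"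
  unfolding has_order_le_def by (meson valid_mono)

lemma hol_add: "has_order_le n m l f \<Longrightarrow> has_order_le n m l g \<Longrightarrow> has_order_le n m l (\<lambda>u. f u + g u)"
  unfolding has_order_le_def by metis

lemma hol_mult: "has_order_le n m l f \<Longrightarrow> has_order_le n m l g \<Longrightarrow> has_order_le n m l (\<lambda>u. f u * g u)"
  unfolding has_order_le_def by metis

lemma hol_const: "has_order_le n m l (\<lambda>u. a)"
  unfolding has_order_le_def by simp

lemma hol_coord: "valid_coord n m l c \<Longrightarrow> has_order_le n m l (\<lambda>u. u c)"
  unfolding has_order_le_def by simp

lemma hol_sum: "(\<And>x. x \<in> S \<Longrightarrow> has_order_le n m l (f x)) \<Longrightarrow> has_order_le n m l (\<lambda>u. \<Sum>x\<in>S. f x u)"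
  unfolding has_order_le_def by (metis (mono_tags, lifting) sum.cong)

lemma hol_prod: "(\<And>x. x \<in> S \<Longrightarrow> has_order_le n m l (f x)) \<Longrightarrow> has_order_le n m l (\<lambda>u. \<Prod>x\<in>S. f x u)"
  unfolding has_order_le_def by (metis (mono_tags, lifting) prod.cong)

lemma pd_zero: "has_order_le n m l F \<Longrightarrow> \<not> valid_coord n m l c \<Longrightarrow> pd c F u = 0"
proof -
  assume h: "has_order_le n m l F" and nv: "\<not> valid_coord n m l c"
  have "(\<lambda>t. F (u(c := t))) = (\<lambda>t. F u)"
    using h nv unfolding has_order_le_def by (intro ext) (metis fun_upd_other)
  then show ?thesis unfolding pd_def by simp
qed

lemma hol_pd: assumes h: "has_order_le n m l F" shows "has_order_le n m l (pd c F)"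
proof (cases "valid_coord n m l c")
  case True
  show ?thesis unfolding has_order_le_def
  proof (intro allI impI)
    fix u v :: jetpt assume a: "\<forall>c. valid_coord n m l c \<longrightarrow> u c = v c"
    have "(\<lambda>t. F (u(c := t))) = (\<lambda>t. F (v(c := t)))"
      using h a unfolding has_order_le_def by (intro ext) (metis fun_upd_apply)
    moreover have "u c = v c" using a True by blast
    ultimately show "pd c F u = pd c F v" unfolding pd_def by simp
  qed
next
  case False
  then show ?thesis using pd_zero[OF h] unfolding has_order_le_def by simp
qed

lemma jo_hol: "has_order_le n m l F \<Longrightarrow> has_order_le n m (jet_order n m F) F"
  unfolding jet_order_def by (rule LeastI)

lemma jo_le: "has_order_le n m l F \<Longrightarrow> jet_order n m F \<le> l"
  unfolding jet_order_def by (rule Least_le)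

lemma smooth_jet_iff: "smooth_jet n m F \<longleftrightarrow> (\<exists>l. has_order_le n m l F) \<and> sm F"
  unfolding smooth_jet_def sm_def ldiff_def by blast

lemma sj_sm: "smooth_jet n m F \<Longrightarrow> sm F" by (simp add: smooth_jet_iff)
lemma sj_ldiff: "smooth_jet n m F \<Longrightarrow> ldiff F" by (simp add: smooth_jet_iff sm_ldiff)
lemma sj_hol: "smooth_jet n m F \<Longrightarrow> has_order_le n m (jet_order n m F) F"
  using jo_hol smooth_jet_iff by blast

lemma sj_add: "smooth_jet n m f \<Longrightarrow> smooth_jet n m g \<Longrightarrow> smooth_jet n m (\<lambda>u. f u + g u)"
  unfolding smooth_jet_iff by (metis hol_add hol_mono max.cobounded1 max.cobounded2 sm_add)

lemma sj_mult: "smooth_jet n m f \<Longrightarrow> smooth_jet n m g \<Longrightarrow> smooth_jet n m (\<lambda>u. f u * g u)"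
  unfolding smooth_jet_iff by (metis hol_mult hol_mono max.cobounded1 max.cobounded2 sm_mult)

lemma sj_const: "smooth_jet n m (\<lambda>u. a)"
  unfolding smooth_jet_iff using hol_const sm_const by blast

lemma sj_coord: "valid_coord n m l c \<Longrightarrow> smooth_jet n m (\<lambda>u. u c)"
  unfolding smooth_jet_iff using hol_coord sm_coord by blast

lemma sj_pd: "smooth_jet n m f \<Longrightarrow> smooth_jet n m (pd c f)"
  unfolding smooth_jet_iff using hol_pd sm_pd by blast

lemma sj_scale: "smooth_jet n m f \<Longrightarrow> smooth_jet n m (\<lambda>u. a * f u)"
  using sj_mult[OF sj_const] by blast

lemma sj_diff: "smooth_jet n m f \<Longrightarrow> smooth_jet n m g \<Longrightarrow> smooth_jet n m (\<lambda>u. f u - g u)"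
proof -
  assume a: "smooth_jet n m f" "smooth_jet n m g"
  have "smooth_jet n m (\<lambda>u. f u + (-1) * g u)" by (intro sj_add sj_scale a)
  then show ?thesis by simp
qed

lemma sj_sum: "finite S \<Longrightarrow> (\<And>x. x \<in> S \<Longrightarrow> smooth_jet n m (f x)) \<Longrightarrow> smooth_jet n m (\<lambda>u. \<Sum>x\<in>S. f x u)"
proof (induction S rule: finite_induct)
  case empty then show ?case by (simp add: sj_const)
next
  case (insert x S)
  have "smooth_jet n m (\<lambda>u. f x u + (\<Sum>x\<in>S. f x u))"
    by (rule sj_add) (use insert in auto)
  then show ?case using insert by simp
qed

lemma sj_prod: "finite S \<Longrightarrow> (\<And>x. x \<in> S \<Longrightarrow> smooth_jet n m (f x)) \<Longrightarrow> smooth_jet n m (\<lambda>u. \<Prod>x\<in>S. f x u)"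
proof (induction S rule: finite_induct)
  case empty then show ?case by (simp add: sj_const)
next
  case (insert x S)
  have "smooth_jet n m (\<lambda>u. f x u * (\<Prod>x\<in>S. f x u))"
    by (rule sj_mult) (use insert in auto)
  then show ?case using insert by simp
qed


lemma finite_MS: "finite {s. midx n s \<and> mabs n s \<le> N}"
proof (rule finite_subset)
  show "{s. midx n s \<and> mabs n s \<le> N} \<subseteq> (\<lambda>f i. if i < n then f i else 0) ` PiE {..<n} (\<lambda>_. {..N})"
  proof
    fix s assume "s \<in> {s. midx n s \<and> mabs n s \<le> N}"
    then have m: "\<forall>i\<ge>n. s i = 0" "(\<Sum>i<n. s i) \<le> N" by (auto simp: midx_def mabs_def)
    have e: "s = (\<lambda>i. if i < n then (restrict s {..<n}) i else 0)" using m(1) by (auto simp: fun_eq_iff)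
    have "\<And>i. i < n \<Longrightarrow> s i \<le> (\<Sum>i<n. s i)" by (rule member_le_sum) auto
    then have R: "restrict s {..<n} \<in> PiE {..<n} (\<lambda>_. {..N})" using m(2) by (auto intro: order_trans)
    show "s \<in> (\<lambda>f i. if i < n then f i else 0) ` PiE {..<n} (\<lambda>_. {..N})"
      by (rule image_eqI[OF _ R]) (rule e)
  qed
  show "finite ((\<lambda>f i. if i < n then f i else 0) ` PiE {..<n} (\<lambda>_. {..N::nat}))"
    by (simp add: finite_PiE)
qed

lemma mabs_upd: "i < n \<Longrightarrow> mabs n (s(i := v)) + s i = mabs n s + v"
proof -
  assume i: "i < n"
  have "mabs n (s(i := v)) = v + (\<Sum>k\<in>{..<n} - {i}. (s(i:=v)) k)"
    unfolding mabs_def using i by (subst sum.remove[of _ i]) auto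
  also have "(\<Sum>k\<in>{..<n} - {i}. (s(i:=v)) k) = (\<Sum>k\<in>{..<n} - {i}. s k)"
    by (rule sum.cong) auto
  moreover have "mabs n s = s i + (\<Sum>k\<in>{..<n} - {i}. s k)"
    unfolding mabs_def using i by (subst sum.remove[of _ i]) auto
  ultimately show ?thesis by simp
qed

lemma mabs_Suc: "i < n \<Longrightarrow> mabs n (s(i := Suc (s i))) = Suc (mabs n s)"
  using mabs_upd[of i n s "Suc (s i)"] by simp

lemma midx_upd: "i < n \<Longrightarrow> midx n s \<Longrightarrow> midx n (s(i := x))"
  by (simp add: midx_def)

definition SS :: "nat \<Rightarrow> nat \<Rightarrow> nat \<Rightarrow> (nat \<times> (nat \<Rightarrow> nat)) set" where
  "SS n m N = {(j, s). j < m \<and> midx n s \<and> mabs n s \<le> N}"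

lemma finite_SS: "finite (SS n m N)"
proof (rule finite_subset)
  show "SS n m N \<subseteq> {..<m} \<times> {s. midx n s \<and> mabs n s \<le> N}" by (auto simp: SS_def)
  show "finite ({..<m} \<times> {s. midx n s \<and> mabs n s \<le> N})" using finite_MS by blast
qed

definition Dp :: "nat \<Rightarrow> nat \<Rightarrow> nat \<Rightarrow> nat \<Rightarrow> jetfun \<Rightarrow> jetfun" where
  "Dp n m N i F = (\<lambda>u. pd (X i) F u +
     (\<Sum>(j, s) \<in> SS n m N. u (P j (s(i := Suc (s i)))) * pd (P j s) F u))"

lemma Dtot_Dp: "Dtot n m i F = Dp n m (jet_order n m F) i F"
  by (simp add: Dtot_def Dp_def SS_def)

lemma Dp_mono: assumes h: "has_order_le n m N F" and le: "N \<le> N'"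
  shows "Dp n m N' i F = Dp n m N i F"
proof -
  have "\<And>u. (\<Sum>(j, s) \<in> SS n m N'. u (P j (s(i := Suc (s i)))) * pd (P j s) F u)
          = (\<Sum>(j, s) \<in> SS n m N. u (P j (s(i := Suc (s i)))) * pd (P j s) F u)"
  proof (rule sum.mono_neutral_right[symmetric, THEN sym])
    fix u
    show "finite (SS n m N')" by (rule finite_SS)
    show "SS n m N \<subseteq> SS n m N'" using le by (auto simp: SS_def)
    show "\<forall>x\<in>SS n m N' - SS n m N. (case x of (j, s) \<Rightarrow> u (P j (s(i := Suc (s i)))) * pd (P j s) F u) = 0"
    proof
      fix x assume "x \<in> SS n m N' - SS n m N"
      then obtain j s where x: "x = (j, s)" and "\<not> valid_coord n m N (P j s)"
        by (auto simp: SS_def valid_coord_def)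
      then show "(case x of (j, s) \<Rightarrow> u (P j (s(i := Suc (s i)))) * pd (P j s) F u) = 0"
        using pd_zero[OF h] by simp
    qed
  qed
  then show ?thesis unfolding Dp_def by simp
qed

lemma Dtot_eq: "has_order_le n m N F \<Longrightarrow> Dtot n m i F = Dp n m N i F"
  using Dp_mono[OF jo_hol jo_le] Dtot_Dp by metis

lemma Dp_add: assumes "ldiff f" "ldiff g"
  shows "Dp n m N i (\<lambda>u. f u + g u) = (\<lambda>u. Dp n m N i f u + Dp n m N i g u)"
  unfolding Dp_def pd_add[OF assms]
  by (simp add: algebra_simps sum.distrib case_prod_beta)

lemma Dp_mult: assumes "ldiff f" "ldiff g"
  shows "Dp n m N i (\<lambda>u. f u * g u) = (\<lambda>u. Dp n m N i f u * g u + f u * Dp n m N i g u)"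
  unfolding Dp_def pd_mult[OF assms]
  by (simp add: algebra_simps sum.distrib case_prod_beta sum_distrib_left sum_distrib_right)

lemma Dp_const: "Dp n m N i (\<lambda>u. a) = (\<lambda>u. 0)"
  unfolding Dp_def pd_const by simp

lemma sj_common: "smooth_jet n m f \<Longrightarrow> smooth_jet n m g \<Longrightarrow>
   \<exists>N. has_order_le n m N f \<and> has_order_le n m N g"
  unfolding smooth_jet_iff by (metis hol_mono max.cobounded1 max.cobounded2)

lemma Dtot_add: assumes "smooth_jet n m f" "smooth_jet n m g"
  shows "Dtot n m i (\<lambda>u. f u + g u) = (\<lambda>u. Dtot n m i f u + Dtot n m i g u)"
proof -
  obtain N where N: "has_order_le n m N f" "has_order_le n m N g" using sj_common[OF assms] by blast
  have "has_order_le n m N (\<lambda>u. f u + g u)" using N by (rule hol_add)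
  then show ?thesis using Dp_add[OF sj_ldiff sj_ldiff, OF assms]
    by (simp add: Dtot_eq[OF N(1)] Dtot_eq[OF N(2)] Dtot_eq[of n m N "\<lambda>u. f u + g u"])
qed

lemma Dtot_mult: assumes "smooth_jet n m f" "smooth_jet n m g"
  shows "Dtot n m i (\<lambda>u. f u * g u) = (\<lambda>u. Dtot n m i f u * g u + f u * Dtot n m i g u)"
proof -
  obtain N where N: "has_order_le n m N f" "has_order_le n m N g" using sj_common[OF assms] by blast
  have "has_order_le n m N (\<lambda>u. f u * g u)" using N by (rule hol_mult)
  then show ?thesis using Dp_mult[OF sj_ldiff sj_ldiff, OF assms]
    by (simp add: Dtot_eq[OF N(1)] Dtot_eq[OF N(2)] Dtot_eq[of n m N "\<lambda>u. f u * g u"])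
qed

lemma Dtot_const: "Dtot n m i (\<lambda>u. a) = (\<lambda>u. 0)"
  by (simp add: Dtot_Dp Dp_const)

lemma Dtot_scale: assumes "smooth_jet n m f"
  shows "Dtot n m i (\<lambda>u. a * f u) = (\<lambda>u. a * Dtot n m i f u)"
  using Dtot_mult[OF sj_const[of n m a] assms, of i] by (simp add: Dtot_const)

lemma Dtot_diff: assumes "smooth_jet n m f" "smooth_jet n m g"
  shows "Dtot n m i (\<lambda>u. f u - g u) = (\<lambda>u. Dtot n m i f u - Dtot n m i g u)"
proof -
  have e: "(\<lambda>u. f u - g u) = (\<lambda>u. f u + (-1) * g u)" by simp
  show ?thesis unfolding e Dtot_add[OF assms(1) sj_scale[OF assms(2)]] Dtot_scale[OF assms(2)]
    by simp
qed

lemma Dtot_sum: "finite S \<Longrightarrow> (\<And>x. x \<in> S \<Longrightarrow> smooth_jet n m (f x)) \<Longrightarrow>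
   Dtot n m i (\<lambda>u. \<Sum>x\<in>S. f x u) = (\<lambda>u. \<Sum>x\<in>S. Dtot n m i (f x) u)"
proof (induction S rule: finite_induct)
  case empty then show ?case by (simp add: Dtot_const)
next
  case (insert x S)
  have s1: "smooth_jet n m (f x)" "smooth_jet n m (\<lambda>u. \<Sum>x\<in>S. f x u)"
    using insert by (auto intro: sj_sum)
  have "Dtot n m i (\<lambda>u. \<Sum>x\<in>insert x S. f x u) = Dtot n m i (\<lambda>u. f x u + (\<Sum>x\<in>S. f x u))"
    by (simp only: sum.insert[OF insert(1,2)])
  also have "\<dots> = (\<lambda>u. Dtot n m i (f x) u + Dtot n m i (\<lambda>u. \<Sum>x\<in>S. f x u) u)"
    using Dtot_add[OF s1] .
  also have "\<dots> = (\<lambda>u. \<Sum>x\<in>insert x S. Dtot n m i (f x) u)"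
    using insert.IH insert.prems by (simp only: sum.insert[OF insert(1,2)]) simp
  finally show ?case .
qed

lemma valid_shift: "i < n \<Longrightarrow> (j, s) \<in> SS n m N \<Longrightarrow> valid_coord n m (Suc N) (P j (s(i := Suc (s i))))"
  by (auto simp: SS_def valid_coord_def midx_upd mabs_Suc)

lemma hol_Dp: assumes i: "i < n" and h: "has_order_le n m N F"
  shows "has_order_le n m (Suc N) (Dp n m N i F)"
  unfolding Dp_def
proof (rule hol_add)
  show "has_order_le n m (Suc N) (pd (X i) F)" by (rule hol_mono[OF hol_pd[OF h]]) simp
  show "has_order_le n m (Suc N) (\<lambda>u. \<Sum>(j, s)\<in>SS n m N. u (P j (s(i := Suc (s i)))) * pd (P j s) F u)"
    unfolding case_prod_beta
  proof (rule hol_sum)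
    fix x assume x: "x \<in> SS n m N"
    show "has_order_le n m (Suc N) (\<lambda>u. u (P (fst x) ((snd x)(i := Suc (snd x i)))) * pd (P (fst x) (snd x)) F u)"
      using valid_shift[OF i, of "fst x" "snd x"] x
      by (intro hol_mult[OF hol_coord hol_mono[OF hol_pd[OF h]]]) auto
  qed
qed

lemma sj_Dp: assumes i: "i < n" and F: "smooth_jet n m F"
  shows "smooth_jet n m (Dp n m N i F)"
  unfolding Dp_def
proof (rule sj_add)
  show "smooth_jet n m (pd (X i) F)" using F by (rule sj_pd)
  show "smooth_jet n m (\<lambda>u. \<Sum>(j, s)\<in>SS n m N. u (P j (s(i := Suc (s i)))) * pd (P j s) F u)"
    unfolding case_prod_beta
  proof (rule sj_sum[OF finite_SS])
    fix x assume x: "x \<in> SS n m N"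
    show "smooth_jet n m (\<lambda>u. u (P (fst x) ((snd x)(i := Suc (snd x i)))) * pd (P (fst x) (snd x)) F u)"
      using valid_shift[OF i, of "fst x" "snd x"] x F
      by (intro sj_mult sj_coord sj_pd) auto
  qed
qed

lemma sj_Dtot: "i < n \<Longrightarrow> smooth_jet n m F \<Longrightarrow> smooth_jet n m (Dtot n m i F)"
  by (simp add: Dtot_Dp sj_Dp)

lemma hol_Dtot: "i < n \<Longrightarrow> has_order_le n m N F \<Longrightarrow> has_order_le n m (Suc N) (Dtot n m i F)"
  by (simp add: Dtot_eq hol_Dp)


lemma schwarz_approx:
  fixes g gx gy gxy gyx :: "real \<Rightarrow> real \<Rightarrow> real"
  assumes dx: "\<And>x y. ((\<lambda>x. g x y) has_real_derivative gx x y) (at x)"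
    and dy: "\<And>x y. ((\<lambda>y. g x y) has_real_derivative gy x y) (at y)"
    and dxy: "\<And>x y. ((\<lambda>y. gx x y) has_real_derivative gxy x y) (at y)"
    and dyx: "\<And>x y. ((\<lambda>x. gy x y) has_real_derivative gyx x y) (at x)"
    and h: "h > 0"
  shows "\<exists>a b c d. x0 < a \<and> a < x0 + h \<and> y0 < b \<and> b < y0 + h \<and>
     x0 < c \<and> c < x0 + h \<and> y0 < d \<and> d < y0 + h \<and> gxy a b = gyx c d"
proof -
  define D where "D = g (x0+h) (y0+h) - g (x0+h) y0 - g x0 (y0+h) + g x0 y0"
  obtain a where a: "x0 < a" "a < x0 + h"
    and ea: "(g (x0+h) (y0+h) - g (x0+h) y0) - (g x0 (y0+h) - g x0 y0) = h * (gx a (y0+h) - gx a y0)"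
  proof -
    have "\<And>x. ((\<lambda>x. g x (y0+h) - g x y0) has_real_derivative gx x (y0+h) - gx x y0) (at x)"
      by (intro DERIV_diff dx)
    then show ?thesis using MVT2[of x0 "x0+h" "\<lambda>x. g x (y0+h) - g x y0" "\<lambda>x. gx x (y0+h) - gx x y0"] h that
      by auto
  qed
  obtain b where b: "y0 < b" "b < y0 + h" and eb: "gx a (y0+h) - gx a y0 = h * gxy a b"
    using MVT2[of y0 "y0+h" "\<lambda>y. gx a y" "\<lambda>y. gxy a y"] h dxy by auto
  obtain d where d: "y0 < d" "d < y0 + h"
    and ed: "(g (x0+h) (y0+h) - g x0 (y0+h)) - (g (x0+h) y0 - g x0 y0) = h * (gy (x0+h) d - gy x0 d)"
  proof -
    have "\<And>y. ((\<lambda>y. g (x0+h) y - g x0 y) has_real_derivative gy (x0+h) y - gy x0 y) (at y)"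
      by (intro DERIV_diff dy)
    then show ?thesis using MVT2[of y0 "y0+h" "\<lambda>y. g (x0+h) y - g x0 y" "\<lambda>y. gy (x0+h) y - gy x0 y"] h that
      by auto
  qed
  obtain c where c: "x0 < c" "c < x0 + h" and ec: "gy (x0+h) d - gy x0 d = h * gyx c d"
    using MVT2[of x0 "x0+h" "\<lambda>x. gy x d" "\<lambda>x. gyx x d"] h dyx by auto
  have "h * (h * gxy a b) = h * (h * gyx c d)"
    using ea eb ed ec by (simp add: algebra_simps)
  then have "gxy a b = gyx c d" using h by simp
  then show ?thesis using a b c d by blast
qed

lemma schwarz:
  fixes g gx gy gxy gyx :: "real \<Rightarrow> real \<Rightarrow> real"
  assumes dx: "\<And>x y. ((\<lambda>x. g x y) has_real_derivative gx x y) (at x)"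
    and dy: "\<And>x y. ((\<lambda>y. g x y) has_real_derivative gy x y) (at y)"
    and dxy: "\<And>x y. ((\<lambda>y. gx x y) has_real_derivative gxy x y) (at y)"
    and dyx: "\<And>x y. ((\<lambda>x. gy x y) has_real_derivative gyx x y) (at x)"
    and c1: "continuous_on UNIV (\<lambda>p. gxy (fst p) (snd p))"
    and c2: "continuous_on UNIV (\<lambda>p. gyx (fst p) (snd p))"
  shows "gxy x0 y0 = gyx x0 y0"
proof (rule ccontr)
  assume ne: "gxy x0 y0 \<noteq> gyx x0 y0"
  define e where "e = \<bar>gxy x0 y0 - gyx x0 y0\<bar> / 2"
  have e: "e > 0" using ne by (simp add: e_def)
  obtain d1 where d1: "d1 > 0" "\<And>p. dist p (x0, y0) < d1 \<Longrightarrow> dist (gxy (fst p) (snd p)) (gxy x0 y0) < e"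
    using c1 e unfolding continuous_on_iff by (metis UNIV_I fst_conv snd_conv)
  obtain d2 where d2: "d2 > 0" "\<And>p. dist p (x0, y0) < d2 \<Longrightarrow> dist (gyx (fst p) (snd p)) (gyx x0 y0) < e"
    using c2 e unfolding continuous_on_iff by (metis UNIV_I fst_conv snd_conv)
  define h where "h = min d1 d2 / 2"
  have h: "h > 0" using d1 d2 by (simp add: h_def)
  obtain a b c d where abcd: "x0 < a" "a < x0 + h" "y0 < b" "b < y0 + h"
     "x0 < c" "c < x0 + h" "y0 < d" "d < y0 + h" and eq: "gxy a b = gyx c d"
    using schwarz_approx[OF dx dy dxy dyx h] by blast
  have near: "dist (p, q) (x0, y0) < min d1 d2" if "x0 < p" "p < x0 + h" "y0 < q" "q < y0 + h" for p q
  proof -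
    have "dist (p, q) (x0, y0) = sqrt ((p - x0)\<^sup>2 + (q - y0)\<^sup>2)"
      by (simp add: dist_Pair_Pair dist_real_def)
    also have "\<dots> \<le> \<bar>p - x0\<bar> + \<bar>q - y0\<bar>" by (rule sqrt_sum_squares_le_sum_abs)
    also have "\<dots> < 2 * h" using that by simp
    finally show ?thesis by (simp add: h_def)
  qed
  have "dist (gxy a b) (gxy x0 y0) < e" using d1(2)[of "(a,b)"] near[of a b] abcd by simp
  moreover have "dist (gyx c d) (gyx x0 y0) < e" using d2(2)[of "(c,d)"] near[of c d] abcd by simp
  ultimately have "\<bar>gxy x0 y0 - gyx x0 y0\<bar> < 2 * e" using eq by (simp add: dist_real_def)
  then show False by (simp add: e_def)
qed

lemma cont_upd2: "continuous_on UNIV (\<lambda>p::real \<times> real. u(a := fst p, b := snd p))"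
proof (rule continuous_on_coordinatewise_then_product)
  fix c
  show "continuous_on UNIV (\<lambda>p::real\<times>real. (u(a := fst p, b := snd p)) c)"
    by (cases "c = b"; cases "c = a") (auto intro: continuous_intros)
qed

lemma pd_comm: assumes F: "sm F" shows "pd a (pd b F) = pd b (pd a F)"
proof (cases "a = b")
  case True then show ?thesis by simp
next
  case ab: False
  show ?thesis
  proof (rule ext)
    fix u :: jetpt
    define U where "U x y = u(a := x, b := y)" for x y
    have tw: "(u(b := y))(a := x) = U x y" for x y using ab by (simp add: U_def fun_upd_twist)
    have tw2: "(u(a := x))(b := y) = U x y" for x y by (simp add: U_def)
    have lF: "ldiff F" "ldiff (pd a F)" "ldiff (pd b F)" using F by (auto intro: sm_ldiff sm_pd)
    have dx: "((\<lambda>x. G (U x y)) has_real_derivative pd a G (U x y)) (at x)" if "ldiff G" for G x y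
      using ldiff_D'[OF that, of "u(b := y)" a x] by (simp add: tw)
    have dy: "((\<lambda>y. G (U x y)) has_real_derivative pd b G (U x y)) (at y)" if "ldiff G" for G x y
      using ldiff_D'[OF that, of "u(a := x)" b y] by (simp add: tw2)
    have cU: "continuous_on UNIV (\<lambda>p::real\<times>real. U (fst p) (snd p))"
      unfolding U_def by (rule cont_upd2)
    have cc: "continuous_on UNIV (\<lambda>p::real\<times>real. G (U (fst p) (snd p)))" if "continuous_on UNIV G" for G
      using continuous_on_compose2[OF that cU] by simp
    have c1: "continuous_on UNIV (pd b (pd a F))" "continuous_on UNIV (pd a (pd b F))"
      using F unfolding sm_def by (metis pds_Cons pds_Nil)+
    have "pd b (pd a F) (U (u a) (u b)) = pd a (pd b F) (U (u a) (u b))"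
      by (rule schwarz[where g="\<lambda>x y. F (U x y)"], rule dx, rule lF, rule dy, rule lF,
          rule dy, rule lF, rule dx, rule lF, rule cc, rule c1, rule cc, rule c1)
    moreover have "U (u a) (u b) = u" by (simp add: U_def)
    ultimately show "pd a (pd b F) u = pd b (pd a F) u" by simp
  qed
qed


definition sh :: "nat \<Rightarrow> (nat \<Rightarrow> nat) \<Rightarrow> (nat \<Rightarrow> nat)" where
  "sh i s = s(i := Suc (s i))"

lemma sh_comm: "sh i (sh j t) = sh j (sh i t)"
  unfolding sh_def by (cases "i = j") (auto simp: fun_eq_iff)

lemma Dp_alt: "Dp n m N i F = (\<lambda>u. pd (X i) F u +
   (\<Sum>x\<in>SS n m N. u (P (fst x) (sh i (snd x))) * pd (P (fst x) (snd x)) F u))"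
  unfolding Dp_def sh_def case_prod_beta ..

lemma sm_term: "sm F \<Longrightarrow> sm (\<lambda>w. w (P (fst x) (sh j (snd x))) * pd (P (fst x) (snd x)) F w)"
  by (intro sm_mult sm_coord sm_pd)

lemma pd_Dp: assumes F: "sm F"
  shows "pd c (Dp n m M j F) = (\<lambda>w. pd c (pd (X j) F) w +
    (\<Sum>x\<in>SS n m M. (if c = P (fst x) (sh j (snd x)) then 1 else 0) * pd (P (fst x) (snd x)) F w
        + w (P (fst x) (sh j (snd x))) * pd c (pd (P (fst x) (snd x)) F) w))"
proof -
  let ?T = "\<lambda>x w. w (P (fst x) (sh j (snd x))) * pd (P (fst x) (snd x)) F w"
  have lA: "ldiff (pd (X j) F)" using F by (intro sm_ldiff sm_pd)
  have lT: "\<And>x. ldiff (?T x)" using F by (intro sm_ldiff sm_term)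
  have lB: "ldiff (\<lambda>w. \<Sum>x\<in>SS n m M. ?T x w)" using lT by (intro ldiff_sum finite_SS)
  have pT: "pd c (?T x) = (\<lambda>w. (if c = P (fst x) (sh j (snd x)) then 1 else 0) * pd (P (fst x) (snd x)) F w
        + w (P (fst x) (sh j (snd x))) * pd c (pd (P (fst x) (snd x)) F) w)" for x
    using pd_mult[OF ldiff_coord sm_ldiff[OF sm_pd[OF F]], of c "P (fst x) (sh j (snd x))" "P (fst x) (snd x)"]
    by (simp add: pd_coord)
  show ?thesis
    unfolding Dp_alt pd_add[OF lA lB] pd_sum[OF finite_SS lT] pT ..
qed

lemma term4: assumes h: "has_order_le n m N F" and j: "j < n"
  shows "(\<Sum>y\<in>SS n m (Suc N). \<Sum>x\<in>SS n m (Suc N). w (P (fst y) (sh i (snd y))) *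
      ((if P (fst y) (snd y) = P (fst x) (sh j (snd x)) then 1 else 0) * pd (P (fst x) (snd x)) F w))
    = (\<Sum>x\<in>SS n m (Suc N). w (P (fst x) (sh i (sh j (snd x)))) * pd (P (fst x) (snd x)) F w)"
proof -
  let ?S = "SS n m (Suc N)"
  have "(\<Sum>y\<in>?S. \<Sum>x\<in>?S. w (P (fst y) (sh i (snd y))) *
      ((if P (fst y) (snd y) = P (fst x) (sh j (snd x)) then 1 else 0) * pd (P (fst x) (snd x)) F w))
    = (\<Sum>x\<in>?S. \<Sum>y\<in>?S. (if y = (fst x, sh j (snd x)) then w (P (fst y) (sh i (snd y))) * pd (P (fst x) (snd x)) F w else 0))"
    by (subst sum.swap) (rule sum.cong[OF refl], rule sum.cong[OF refl], auto simp: prod_eq_iff)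
  also have "\<dots> = (\<Sum>x\<in>?S. w (P (fst x) (sh i (sh j (snd x)))) * pd (P (fst x) (snd x)) F w)"
  proof (rule sum.cong[OF refl])
    fix x assume x: "x \<in> ?S"
    show "(\<Sum>y\<in>?S. (if y = (fst x, sh j (snd x)) then w (P (fst y) (sh i (snd y))) * pd (P (fst x) (snd x)) F w else 0))
       = w (P (fst x) (sh i (sh j (snd x)))) * pd (P (fst x) (snd x)) F w"
    proof (cases "(fst x, sh j (snd x)) \<in> ?S")
      case True then show ?thesis by (simp add: sum.delta[OF finite_SS])
    next
      case False
      then have "mabs n (snd x) > N" using x j by (auto simp: SS_def sh_def midx_upd mabs_Suc)
      then have "\<not> valid_coord n m N (P (fst x) (snd x))" by (simp add: valid_coord_def)
      then have "pd (P (fst x) (snd x)) F w = 0" by (rule pd_zero[OF h])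
      then show ?thesis by (simp add: sum.delta[OF finite_SS])
    qed
  qed
  finally show ?thesis .
qed

definition EE :: "nat \<Rightarrow> nat \<Rightarrow> nat \<Rightarrow> nat \<Rightarrow> jetfun \<Rightarrow> nat \<Rightarrow> nat \<Rightarrow> jetpt \<Rightarrow> real" where
  "EE n m M i F = (\<lambda>i j w. pd (X i) (pd (X j) F) w
     + (\<Sum>x\<in>SS n m M. w (P (fst x) (sh j (snd x))) * pd (X i) (pd (P (fst x) (snd x)) F) w)
     + (\<Sum>y\<in>SS n m M. w (P (fst y) (sh i (snd y))) * pd (P (fst y) (snd y)) (pd (X j) F) w)
     + (\<Sum>y\<in>SS n m M. \<Sum>x\<in>SS n m M. w (P (fst y) (sh i (snd y))) *
         ((if P (fst y) (snd y) = P (fst x) (sh j (snd x)) then 1 else 0) * pd (P (fst x) (snd x)) F w))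
     + (\<Sum>y\<in>SS n m M. \<Sum>x\<in>SS n m M. w (P (fst y) (sh i (snd y))) *
         (w (P (fst x) (sh j (snd x))) * pd (P (fst y) (snd y)) (pd (P (fst x) (snd x)) F) w)))"

lemma Dp_Dp_EE: assumes F: "sm F"
  shows "Dp n m M i (Dp n m M j F) w = EE n m M i F i j w"
  unfolding EE_def Dp_alt[of n m M i] pd_Dp[OF F]
  by (simp add: algebra_simps sum.distrib sum_distrib_left)

lemma EE_sym: assumes F: "sm F" and h: "has_order_le n m N F" and i: "i < n" and j: "j < n"
  shows "EE n m (Suc N) i F i j w = EE n m (Suc N) i F j i w"
proof -
  let ?S = "SS n m (Suc N)"
  have t1: "pd (X i) (pd (X j) F) w = pd (X j) (pd (X i) F) w" using pd_comm[OF F] by simp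
  have t23: "(\<Sum>x\<in>?S. w (P (fst x) (sh j (snd x))) * pd (X i) (pd (P (fst x) (snd x)) F) w)
     = (\<Sum>y\<in>?S. w (P (fst y) (sh j (snd y))) * pd (P (fst y) (snd y)) (pd (X i) F) w)"
    using pd_comm[OF F] by simp
  have t32: "(\<Sum>x\<in>?S. w (P (fst x) (sh i (snd x))) * pd (X j) (pd (P (fst x) (snd x)) F) w)
     = (\<Sum>y\<in>?S. w (P (fst y) (sh i (snd y))) * pd (P (fst y) (snd y)) (pd (X j) F) w)"
    using pd_comm[OF F] by simp
  have t4: "(\<Sum>y\<in>?S. \<Sum>x\<in>?S. w (P (fst y) (sh i (snd y))) *
         ((if P (fst y) (snd y) = P (fst x) (sh j (snd x)) then 1 else 0) * pd (P (fst x) (snd x)) F w))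
     = (\<Sum>y\<in>?S. \<Sum>x\<in>?S. w (P (fst y) (sh j (snd y))) *
         ((if P (fst y) (snd y) = P (fst x) (sh i (snd x)) then 1 else 0) * pd (P (fst x) (snd x)) F w))"
    unfolding term4[OF h j] term4[OF h i] sh_comm[of i j] ..
  have t5: "(\<Sum>y\<in>?S. \<Sum>x\<in>?S. w (P (fst y) (sh i (snd y))) *
         (w (P (fst x) (sh j (snd x))) * pd (P (fst y) (snd y)) (pd (P (fst x) (snd x)) F) w))
     = (\<Sum>y\<in>?S. \<Sum>x\<in>?S. w (P (fst y) (sh j (snd y))) *
         (w (P (fst x) (sh i (snd x))) * pd (P (fst y) (snd y)) (pd (P (fst x) (snd x)) F) w))"
    by (subst sum.swap) (simp add: pd_comm[OF F] mult_ac)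
  show ?thesis unfolding EE_def using t1 t23 t32 t4 t5 by simp
qed

lemma Dp_comm: assumes F: "sm F" and h: "has_order_le n m N F" and i: "i < n" and j: "j < n"
  shows "Dp n m (Suc N) i (Dp n m (Suc N) j F) = Dp n m (Suc N) j (Dp n m (Suc N) i F)"
proof (rule ext)
  fix w
  have "EE n m (Suc N) j F j i w = EE n m (Suc N) i F j i w" by (simp add: EE_def)
  then show "Dp n m (Suc N) i (Dp n m (Suc N) j F) w = Dp n m (Suc N) j (Dp n m (Suc N) i F) w"
    unfolding Dp_Dp_EE[OF F] using EE_sym[OF F h i j] by simp
qed

lemma Dtot_comm: assumes F: "smooth_jet n m F" and i: "i < n" and j: "j < n"
  shows "Dtot n m i (Dtot n m j F) = Dtot n m j (Dtot n m i F)"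
proof -
  define N where "N = jet_order n m F"
  have h: "has_order_le n m N F" unfolding N_def by (rule sj_hol[OF F])
  have e: "Dtot n m k (Dtot n m l F) = Dp n m (Suc N) k (Dp n m (Suc N) l F)" if "l < n" for k l
  proof -
    have "Dtot n m l F = Dp n m (Suc N) l F" using Dtot_eq[OF h] Dp_mono[OF h, of "Suc N"] by simp
    moreover have "has_order_le n m (Suc N) (Dtot n m l F)" by (rule hol_Dtot[OF that h])
    ultimately show ?thesis using Dtot_eq by metis
  qed
  show ?thesis unfolding e[OF i] e[OF j] by (rule Dp_comm[OF sj_sm[OF F] h i j])
qed


definition DL :: "nat \<Rightarrow> nat \<Rightarrow> nat list \<Rightarrow> (nat \<Rightarrow> nat) \<Rightarrow> jetfun \<Rightarrow> jetfun" where
  "DL n m xs t G = foldr (\<lambda>i G. (Dtot n m i ^^ t i) G) xs G"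

lemma DL_Nil[simp]: "DL n m [] t G = G" by (simp add: DL_def)
lemma DL_Cons[simp]: "DL n m (x # xs) t G = (Dtot n m x ^^ t x) (DL n m xs t G)" by (simp add: DL_def)
lemma Dmulti_DL: "Dmulti n m t G = DL n m [0..<n] t G" by (simp add: Dmulti_def DL_def)

lemma sj_pow: "i < n \<Longrightarrow> smooth_jet n m G \<Longrightarrow> smooth_jet n m ((Dtot n m i ^^ k) G)"
  by (induction k) (auto intro: sj_Dtot)

lemma sj_DL: "\<forall>x\<in>set xs. x < n \<Longrightarrow> smooth_jet n m G \<Longrightarrow> smooth_jet n m (DL n m xs t G)"
  by (induction xs) (auto intro: sj_pow)

lemma sj_Dmulti: "smooth_jet n m G \<Longrightarrow> smooth_jet n m (Dmulti n m t G)"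
  unfolding Dmulti_DL by (rule sj_DL) auto

lemma pow_add: "i < n \<Longrightarrow> smooth_jet n m f \<Longrightarrow> smooth_jet n m g \<Longrightarrow>
  (Dtot n m i ^^ k) (\<lambda>u. f u + g u) = (\<lambda>u. (Dtot n m i ^^ k) f u + (Dtot n m i ^^ k) g u)"
  by (induction k) (auto simp: Dtot_add sj_pow)

lemma DL_add: "\<forall>x\<in>set xs. x < n \<Longrightarrow> smooth_jet n m f \<Longrightarrow> smooth_jet n m g \<Longrightarrow>
  DL n m xs t (\<lambda>u. f u + g u) = (\<lambda>u. DL n m xs t f u + DL n m xs t g u)"
  by (induction xs) (auto simp: pow_add sj_DL)

lemma Dmulti_add: "smooth_jet n m f \<Longrightarrow> smooth_jet n m g \<Longrightarrow>
  Dmulti n m t (\<lambda>u. f u + g u) = (\<lambda>u. Dmulti n m t f u + Dmulti n m t g u)"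
  unfolding Dmulti_DL by (rule DL_add) auto

lemma pow_zero: "(Dtot n m i ^^ k) (\<lambda>u. 0) = (\<lambda>u. 0)"
  by (induction k) (auto simp: Dtot_const)

lemma Dmulti_zero_fun: "Dmulti n m t (\<lambda>u. 0) = (\<lambda>u. 0)"
proof -
  have "DL n m xs t (\<lambda>u. 0) = (\<lambda>u. 0)" for xs by (induction xs) (auto simp: pow_zero)
  then show ?thesis by (simp add: Dmulti_DL)
qed

lemma Dmulti_scale: assumes f: "smooth_jet n m f"
  shows "Dmulti n m t (\<lambda>u. a * f u) = (\<lambda>u. a * Dmulti n m t f u)"
proof -
  have p: "(Dtot n m i ^^ k) (\<lambda>u. a * g u) = (\<lambda>u. a * (Dtot n m i ^^ k) g u)"
    if "i < n" "smooth_jet n m g" for i k g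
    using that by (induction k) (auto simp: Dtot_scale sj_pow)
  have "\<forall>x\<in>set xs. x < n \<Longrightarrow> DL n m xs t (\<lambda>u. a * f u) = (\<lambda>u. a * DL n m xs t f u)" for xs
    by (induction xs) (auto simp: p sj_DL f)
  then show ?thesis by (simp add: Dmulti_DL)
qed

lemma Dmulti_diff: assumes "smooth_jet n m f" "smooth_jet n m g"
  shows "Dmulti n m t (\<lambda>u. f u - g u) = (\<lambda>u. Dmulti n m t f u - Dmulti n m t g u)"
proof -
  have e: "(\<lambda>u. f u - g u) = (\<lambda>u. f u + (-1) * g u)" by simp
  show ?thesis unfolding e Dmulti_add[OF assms(1) sj_scale[OF assms(2)]] Dmulti_scale[OF assms(2)]
    by simp
qed

lemma Dmulti_sum: "finite S \<Longrightarrow> (\<And>x. x \<in> S \<Longrightarrow> smooth_jet n m (f x)) \<Longrightarrow>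
   Dmulti n m t (\<lambda>u. \<Sum>x\<in>S. f x u) = (\<lambda>u. \<Sum>x\<in>S. Dmulti n m t (f x) u)"
proof (induction S rule: finite_induct)
  case empty then show ?case by (simp add: Dmulti_zero_fun)
next
  case (insert x S)
  have s1: "smooth_jet n m (f x)" "smooth_jet n m (\<lambda>u. \<Sum>x\<in>S. f x u)"
    using insert by (auto intro: sj_sum)
  have "Dmulti n m t (\<lambda>u. \<Sum>x\<in>insert x S. f x u) = Dmulti n m t (\<lambda>u. f x u + (\<Sum>x\<in>S. f x u))"
    by (simp only: sum.insert[OF insert(1,2)])
  also have "\<dots> = (\<lambda>u. Dmulti n m t (f x) u + Dmulti n m t (\<lambda>u. \<Sum>x\<in>S. f x u) u)"
    using Dmulti_add[OF s1] .
  also have "\<dots> = (\<lambda>u. \<Sum>x\<in>insert x S. Dmulti n m t (f x) u)"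
    using insert.IH insert.prems by (simp only: sum.insert[OF insert(1,2)]) simp
  finally show ?case .
qed

lemma Dmulti_zero_idx: "Dmulti n m (\<lambda>_. 0) G = G"
proof -
  have "DL n m xs (\<lambda>_. 0) G = G" for xs by (induction xs) auto
  then show ?thesis by (simp add: Dmulti_DL)
qed

lemma Dtot_pow_comm: "i < n \<Longrightarrow> x < n \<Longrightarrow> smooth_jet n m H \<Longrightarrow>
  Dtot n m i ((Dtot n m x ^^ k) H) = (Dtot n m x ^^ k) (Dtot n m i H)"
proof (induction k)
  case 0 then show ?case by simp
next
  case (Suc k)
  have "Dtot n m i (Dtot n m x ((Dtot n m x ^^ k) H)) = Dtot n m x (Dtot n m i ((Dtot n m x ^^ k) H))"
    using Suc.prems by (intro Dtot_comm sj_pow)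
  then show ?case using Suc by simp
qed

lemma DL_cong: "(\<And>x. x \<in> set xs \<Longrightarrow> t x = t' x) \<Longrightarrow> DL n m xs t G = DL n m xs t' G"
  by (induction xs) auto

lemma Dtot_DL: "i < n \<Longrightarrow> \<forall>x\<in>set xs. x < n \<Longrightarrow> distinct xs \<Longrightarrow> i \<in> set xs \<Longrightarrow> smooth_jet n m G \<Longrightarrow>
   Dtot n m i (DL n m xs t G) = DL n m xs (sh i t) G"
proof (induction xs)
  case Nil then show ?case by simp
next
  case (Cons x xs)
  show ?case
  proof (cases "x = i")
    case True
    then have ni: "i \<notin> set xs" using Cons by auto
    have "DL n m xs (sh i t) G = DL n m xs t G" by (rule DL_cong) (use ni in \<open>auto simp: sh_def\<close>)
    moreover have "sh i t i = Suc (t i)" by (simp add: sh_def)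
    ultimately show ?thesis using True by simp
  next
    case False
    then have "i \<in> set xs" using Cons by auto
    then have "Dtot n m i (DL n m xs t G) = DL n m xs (sh i t) G" using Cons by auto
    moreover have "sh i t x = t x" using False by (simp add: sh_def)
    ultimately show ?thesis using Cons False by (simp add: Dtot_pow_comm sj_DL)
  qed
qed

lemma Dtot_Dmulti: "i < n \<Longrightarrow> smooth_jet n m G \<Longrightarrow> Dtot n m i (Dmulti n m t G) = Dmulti n m (sh i t) G"
  unfolding Dmulti_DL by (rule Dtot_DL) auto


definition Tset :: "nat \<Rightarrow> nat \<Rightarrow> (nat \<Rightarrow> jetfun) \<Rightarrow> nat \<Rightarrow> int \<Rightarrow> (nat \<Rightarrow> nat) set" where
  "Tset n m F i k = {t. midx n t \<and> int (jet_order n m (F i) + mabs n t) \<le> k}"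

lemma finite_Tset: "finite (Tset n m F i k)"
  by (rule finite_subset[OF _ finite_MS[of n "nat k"]]) (auto simp: Tset_def)

lemma Jideal_iff: "w \<in> Jideal n m r F k \<longleftrightarrow> (\<exists>a. (\<forall>i t. smooth_jet n m (a i t)) \<and>
   w = (\<lambda>u. \<Sum>i<r. \<Sum>t\<in>Tset n m F i k. a i t u * Dmulti n m t (F i) u))"
  unfolding Jideal_def Tset_def by simp

locale jsys =
  fixes n m r :: nat and F :: "nat \<Rightarrow> jetfun"
  assumes smF: "\<And>i. i < r \<Longrightarrow> smooth_jet n m (F i)"
begin

abbreviation W where "W k \<equiv> Jideal n m r F k"

lemma W_zero: "(\<lambda>u. 0) \<in> W k"
  unfolding Jideal_iff by (rule exI[of _ "\<lambda>i t u. 0"]) (simp add: sj_const)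

lemma W_add: assumes "w1 \<in> W k" "w2 \<in> W k" shows "(\<lambda>u. w1 u + w2 u) \<in> W k"
proof -
  obtain a1 where a1: "\<forall>i t. smooth_jet n m (a1 i t)"
    "w1 = (\<lambda>u. \<Sum>i<r. \<Sum>t\<in>Tset n m F i k. a1 i t u * Dmulti n m t (F i) u)"
    using assms(1) unfolding Jideal_iff by blast
  obtain a2 where a2: "\<forall>i t. smooth_jet n m (a2 i t)"
    "w2 = (\<lambda>u. \<Sum>i<r. \<Sum>t\<in>Tset n m F i k. a2 i t u * Dmulti n m t (F i) u)"
    using assms(2) unfolding Jideal_iff by blast
  show ?thesis unfolding Jideal_iff
    by (rule exI[of _ "\<lambda>i t u. a1 i t u + a2 i t u"])
       (simp add: a1 a2 sj_add sum.distrib ring_distribs)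
qed

lemma W_mult: assumes c: "smooth_jet n m c" and w: "w \<in> W k" shows "(\<lambda>u. c u * w u) \<in> W k"
proof -
  obtain a where a: "\<forall>i t. smooth_jet n m (a i t)"
    "w = (\<lambda>u. \<Sum>i<r. \<Sum>t\<in>Tset n m F i k. a i t u * Dmulti n m t (F i) u)"
    using w unfolding Jideal_iff by blast
  show ?thesis unfolding Jideal_iff
    by (rule exI[of _ "\<lambda>i t u. c u * a i t u"])
       (simp add: a c sj_mult sum_distrib_left mult.assoc)
qed

lemma W_scale: "w \<in> W k \<Longrightarrow> (\<lambda>u. b * w u) \<in> W k"
  using W_mult[OF sj_const] by blast

lemma W_diff: assumes "w1 \<in> W k" "w2 \<in> W k" shows "(\<lambda>u. w1 u - w2 u) \<in> W k"
  using W_add[OF assms(1) W_scale[OF assms(2), of "-1"]] by simp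

lemma W_sum: "finite S \<Longrightarrow> (\<And>x. x \<in> S \<Longrightarrow> f x \<in> W k) \<Longrightarrow> (\<lambda>u. \<Sum>x\<in>S. f x u) \<in> W k"
proof (induction S rule: finite_induct)
  case empty then show ?case by (simp add: W_zero)
next
  case (insert x S)
  have "(\<lambda>u. f x u + (\<Sum>x\<in>S. f x u)) \<in> W k" using insert by (intro W_add) auto
  then show ?case using insert by simp
qed

lemma W_mono: assumes w: "w \<in> W k" and le: "k \<le> k'" shows "w \<in> W k'"
proof -
  obtain a where a: "\<forall>i t. smooth_jet n m (a i t)"
    "w = (\<lambda>u. \<Sum>i<r. \<Sum>t\<in>Tset n m F i k. a i t u * Dmulti n m t (F i) u)"
    using w unfolding Jideal_iff by blast
  have sub: "Tset n m F i k \<subseteq> Tset n m F i k'" for i using le by (auto simp: Tset_def)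
  have e: "(\<Sum>t\<in>Tset n m F i k'. (if t \<in> Tset n m F i k then a i t else (\<lambda>u. 0)) u * Dmulti n m t (F i) u)
     = (\<Sum>t\<in>Tset n m F i k. a i t u * Dmulti n m t (F i) u)" for i u
  proof -
    have "(\<Sum>t\<in>Tset n m F i k. a i t u * Dmulti n m t (F i) u)
        = (\<Sum>t\<in>Tset n m F i k' \<inter> Tset n m F i k. a i t u * Dmulti n m t (F i) u)"
      using sub by (simp add: Int_absorb1)
    also have "\<dots> = (\<Sum>t\<in>Tset n m F i k'. if t \<in> Tset n m F i k then a i t u * Dmulti n m t (F i) u else 0)"
      by (rule sum.inter_restrict[OF finite_Tset])
    finally have *: "(\<Sum>t\<in>Tset n m F i k. a i t u * Dmulti n m t (F i) u) =
       (\<Sum>t\<in>Tset n m F i k'. if t \<in> Tset n m F i k then a i t u * Dmulti n m t (F i) u else 0)" .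
    have "\<And>t. (if t \<in> Tset n m F i k then a i t else (\<lambda>u. 0)) u * Dmulti n m t (F i) u =
       (if t \<in> Tset n m F i k then a i t u * Dmulti n m t (F i) u else 0)" by simp
    then show ?thesis using * by simp
  qed
  show ?thesis unfolding Jideal_iff
    by (rule exI[of _ "\<lambda>i t. if t \<in> Tset n m F i k then a i t else (\<lambda>u. 0)"])
       (auto simp: a sj_const e)
qed

lemma W_basic: assumes i: "i < r" and t: "midx n t" and k: "int (jet_order n m (F i) + mabs n t) \<le> k"
  and c: "smooth_jet n m c"
  shows "(\<lambda>u. c u * Dmulti n m t (F i) u) \<in> W k"
proof -
  have tin: "t \<in> Tset n m F i k" using t k by (simp add: Tset_def)
  have e: "(\<Sum>i'<r. \<Sum>t'\<in>Tset n m F i' k. (if i' = i \<and> t' = t then c else (\<lambda>u. 0)) u * Dmulti n m t' (F i') u)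
      = c u * Dmulti n m t (F i) u" for u
  proof -
    have "(\<Sum>i'<r. \<Sum>t'\<in>Tset n m F i' k. (if i' = i \<and> t' = t then c else (\<lambda>u. 0)) u * Dmulti n m t' (F i') u)
       = (\<Sum>i'<r. if i' = i then (\<Sum>t'\<in>Tset n m F i' k. if t' = t then c u * Dmulti n m t' (F i') u else 0) else 0)"
      by (rule sum.cong[OF refl]) (auto intro!: sum.cong)
    also have "\<dots> = c u * Dmulti n m t (F i) u"
      using i tin by (simp add: sum.delta[OF finite_Tset])
    finally show ?thesis .
  qed
  show ?thesis unfolding Jideal_iff
    by (rule exI[of _ "\<lambda>i' t'. if i' = i \<and> t' = t then c else (\<lambda>u. 0)"])
       (auto simp: c sj_const e)
qed

lemma W_sj: assumes w: "w \<in> W k" shows "smooth_jet n m w"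
proof -
  obtain a where a: "\<forall>i t. smooth_jet n m (a i t)"
    "w = (\<lambda>u. \<Sum>i<r. \<Sum>t\<in>Tset n m F i k. a i t u * Dmulti n m t (F i) u)"
    using w unfolding Jideal_iff by blast
  show ?thesis unfolding a(2)
    by (intro sj_sum finite_Tset sj_mult sj_Dmulti smF finite_lessThan) (auto simp: a(1))
qed

end


lemma mabs_sh: "i < n \<Longrightarrow> mabs n (sh i t) = Suc (mabs n t)"
  by (simp add: sh_def mabs_Suc)

lemma midx_sh: "i < n \<Longrightarrow> midx n t \<Longrightarrow> midx n (sh i t)"
  by (simp add: sh_def midx_upd)

context jsys
begin

lemma W_Dtot: assumes i: "i < n" and w: "w \<in> W k" shows "Dtot n m i w \<in> W (k + 1)"
proof -
  obtain a where a: "\<forall>i t. smooth_jet n m (a i t)"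
    "w = (\<lambda>u. \<Sum>i<r. \<Sum>t\<in>Tset n m F i k. a i t u * Dmulti n m t (F i) u)"
    using w unfolding Jideal_iff by blast
  let ?g = "\<lambda>i' t u. a i' t u * Dmulti n m t (F i') u"
  have sg: "i' < r \<Longrightarrow> smooth_jet n m (?g i' t)" for i' t
    using a(1) smF by (intro sj_mult sj_Dmulti) auto
  have sf: "i' < r \<Longrightarrow> smooth_jet n m (\<lambda>u. \<Sum>t\<in>Tset n m F i' k. ?g i' t u)" for i'
    using sg by (intro sj_sum finite_Tset)
  have e1: "Dtot n m i w = (\<lambda>u. \<Sum>i'<r. Dtot n m i (\<lambda>u. \<Sum>t\<in>Tset n m F i' k. ?g i' t u) u)"
    unfolding a(2) by (rule Dtot_sum) (auto intro: sf)
  have e2: "i' < r \<Longrightarrow> Dtot n m i (\<lambda>u. \<Sum>t\<in>Tset n m F i' k. ?g i' t u)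
      = (\<lambda>u. \<Sum>t\<in>Tset n m F i' k. Dtot n m i (?g i' t) u)" for i'
    by (rule Dtot_sum[OF finite_Tset]) (rule sg)
  have e3: "i' < r \<Longrightarrow> Dtot n m i (?g i' t) = (\<lambda>u. Dtot n m i (a i' t) u * Dmulti n m t (F i') u
        + a i' t u * Dmulti n m (sh i t) (F i') u)" for i' t
    using Dtot_mult[OF a(1)[rule_format] sj_Dmulti[OF smF]] Dtot_Dmulti[OF i smF] by simp
  have e: "Dtot n m i w = (\<lambda>u. \<Sum>i'<r. \<Sum>t\<in>Tset n m F i' k. Dtot n m i (a i' t) u * Dmulti n m t (F i') u
        + a i' t u * Dmulti n m (sh i t) (F i') u)"
    unfolding e1 using e2 e3 by (intro ext sum.cong) auto
  show ?thesis unfolding e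
  proof (intro W_sum finite_Tset finite_lessThan W_add)
    fix i' t assume i': "i' \<in> {..<r}" and t: "t \<in> Tset n m F i' k"
    then have t': "midx n t" "int (jet_order n m (F i') + mabs n t) \<le> k" by (auto simp: Tset_def)
    show "(\<lambda>u. Dtot n m i (a i' t) u * Dmulti n m t (F i') u) \<in> W (k + 1)"
      using t' i' by (intro W_basic sj_Dtot i a(1)[rule_format]) auto
    show "(\<lambda>u. a i' t u * Dmulti n m (sh i t) (F i') u) \<in> W (k + 1)"
      using t' i' by (intro W_basic midx_sh i a(1)[rule_format]) (auto simp: mabs_sh[OF i])
  qed
qed

lemma W_pow: "i < n \<Longrightarrow> w \<in> W k \<Longrightarrow> (Dtot n m i ^^ p) w \<in> W (k + int p)"
proof (induction p)
  case 0 then show ?case by simp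
next
  case (Suc p)
  have "Dtot n m i ((Dtot n m i ^^ p) w) \<in> W (k + int p + 1)" using Suc by (intro W_Dtot) auto
  then show ?case by (simp add: ac_simps)
qed

lemma W_DL: "\<forall>x\<in>set xs. x < n \<Longrightarrow> w \<in> W k \<Longrightarrow> DL n m xs s w \<in> W (k + int (sum_list (map s xs)))"
proof (induction xs)
  case Nil then show ?case by simp
next
  case (Cons x xs)
  have "(Dtot n m x ^^ s x) (DL n m xs s w) \<in> W (k + int (sum_list (map s xs)) + int (s x))"
    using Cons by (intro W_pow) auto
  then show ?case by (simp add: algebra_simps)
qed

lemma W_Dmulti: "w \<in> W k \<Longrightarrow> Dmulti n m s w \<in> W (k + int (mabs n s))"
proof -
  assume w: "w \<in> W k"
  have "sum_list (map s [0..<n]) = mabs n s"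
    unfolding mabs_def by (simp add: sum_set_upt_conv_sum_list_nat[symmetric] atLeast0LessThan)
  then show ?thesis unfolding Dmulti_DL using W_DL[OF _ w, of "[0..<n]" s] by simp
qed

lemma W_ell: assumes A: "smooth_jet n m A" and w: "w \<in> W k"
  shows "ell n m j A w \<in> W (k + int (jet_order n m A))"
  unfolding ell_def
proof (intro W_sum finite_MS W_mult sj_pd A)
  fix s assume "s \<in> {s. midx n s \<and> mabs n s \<le> jet_order n m A}"
  then have "k + int (mabs n s) \<le> k + int (jet_order n m A)" by simp
  then show "Dmulti n m s w \<in> W (k + int (jet_order n m A))" using W_Dmulti[OF w] W_mono by blast
qed

end


lemma mabs_add: "mabs n (\<lambda>i. a i + b i) = mabs n a + mabs n b"
  by (simp add: mabs_def sum.distrib)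

lemma midx_add: "midx n a \<Longrightarrow> midx n b \<Longrightarrow> midx n (\<lambda>i. a i + b i)"
  by (simp add: midx_def)

context jsys
begin

definition rel :: "nat \<Rightarrow> jetfun \<Rightarrow> jetfun \<Rightarrow> (nat \<Rightarrow> nat) \<Rightarrow> bool" where
  "rel i0 Y c T \<longleftrightarrow> smooth_jet n m Y \<and> smooth_jet n m c \<and> midx n T \<and>
     (\<lambda>u. Y u - c u * Dmulti n m T (F i0) u) \<in> W (int (jet_order n m (F i0) + mabs n T) - 1)"

lemma rel_step: assumes i: "i < n" and i0: "i0 < r" and R: "rel i0 Y c T"
  shows "rel i0 (Dtot n m i Y) c (sh i T)"
proof -
  let ?K = "int (jet_order n m (F i0) + mabs n T)"
  let ?D = "Dmulti n m T (F i0)"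
  define Z where "Z = (\<lambda>u. Y u - c u * ?D u)"
  have ZW: "Z \<in> W (?K - 1)" and sY: "smooth_jet n m Y" and sc: "smooth_jet n m c" and T: "midx n T"
    using R unfolding rel_def Z_def by auto
  have sZ: "smooth_jet n m Z" using ZW by (rule W_sj)
  have sD: "smooth_jet n m ?D" using smF[OF i0] by (rule sj_Dmulti)
  have Y: "Y = (\<lambda>u. Z u + c u * ?D u)" unfolding Z_def by simp
  have DY: "Dtot n m i Y = (\<lambda>u. Dtot n m i Z u + (Dtot n m i c u * ?D u + c u * Dmulti n m (sh i T) (F i0) u))"
    unfolding Y Dtot_add[OF sZ sj_mult[OF sc sD]] Dtot_mult[OF sc sD] Dtot_Dmulti[OF i smF[OF i0]] ..
  have e: "(\<lambda>u. Dtot n m i Y u - c u * Dmulti n m (sh i T) (F i0) u)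
      = (\<lambda>u. Dtot n m i Z u + Dtot n m i c u * ?D u)"
    unfolding DY by (simp add: algebra_simps)
  have K: "int (jet_order n m (F i0) + mabs n (sh i T)) - 1 = ?K" by (simp add: mabs_sh[OF i])
  have "(\<lambda>u. Dtot n m i Z u + Dtot n m i c u * ?D u) \<in> W ?K"
  proof (rule W_add)
    show "Dtot n m i Z \<in> W ?K" using W_Dtot[OF i ZW] by simp
    show "(\<lambda>u. Dtot n m i c u * ?D u) \<in> W ?K"
      by (rule W_basic[OF i0 T]) (auto intro: sj_Dtot i sc)
  qed
  then show ?thesis unfolding rel_def e K
    using sj_Dtot[OF i sY] sc midx_sh[OF i T] by simp
qed

lemma rel_pow: assumes i: "i < n" and i0: "i0 < r" and R: "rel i0 Y c T"
  shows "rel i0 ((Dtot n m i ^^ p) Y) c (T(i := T i + p))"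
proof (induction p)
  case 0 then show ?case using R by simp
next
  case (Suc p)
  have "rel i0 (Dtot n m i ((Dtot n m i ^^ p) Y)) c (sh i (T(i := T i + p)))"
    by (rule rel_step[OF i i0 Suc])
  moreover have "sh i (T(i := T i + p)) = T(i := T i + Suc p)" by (simp add: sh_def)
  ultimately show ?case by (simp only: funpow.simps comp_apply)
qed

lemma rel_DL: assumes i0: "i0 < r" and R: "rel i0 Y c T"
  shows "\<forall>x\<in>set xs. x < n \<Longrightarrow> distinct xs \<Longrightarrow>
    rel i0 (DL n m xs s Y) c (\<lambda>i. T i + (if i \<in> set xs then s i else 0))"
proof (induction xs)
  case Nil then show ?case using R by simp
next
  case (Cons x xs)
  let ?T1 = "\<lambda>i. T i + (if i \<in> set xs then s i else 0)"
  have IH: "rel i0 (DL n m xs s Y) c ?T1" using Cons by auto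
  have "rel i0 ((Dtot n m x ^^ s x) (DL n m xs s Y)) c (?T1(x := ?T1 x + s x))"
    using Cons.prems by (intro rel_pow[OF _ i0 IH]) auto
  moreover have "?T1(x := ?T1 x + s x) = (\<lambda>i. T i + (if i \<in> set (x # xs) then s i else 0))"
    using Cons.prems by (auto simp: fun_eq_iff)
  ultimately show ?case by simp
qed

lemma leibniz: assumes i0: "i0 < r" and T: "midx n T" and s: "midx n s" and c: "smooth_jet n m c"
  shows "(\<lambda>u. Dmulti n m s (\<lambda>u. c u * Dmulti n m T (F i0) u) u - c u * Dmulti n m (\<lambda>i. T i + s i) (F i0) u)
     \<in> W (int (jet_order n m (F i0) + mabs n T + mabs n s) - 1)"
proof -
  have R0: "rel i0 (\<lambda>u. c u * Dmulti n m T (F i0) u) c T"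
    unfolding rel_def using T c W_zero by (auto intro: sj_mult sj_Dmulti smF[OF i0])
  have "rel i0 (DL n m [0..<n] s (\<lambda>u. c u * Dmulti n m T (F i0) u)) c
      (\<lambda>i. T i + (if i \<in> set [0..<n] then s i else 0))"
    by (rule rel_DL[OF i0 R0]) auto
  moreover have "(\<lambda>i. T i + (if i \<in> set [0..<n] then s i else 0)) = (\<lambda>i. T i + s i)"
    using s by (auto simp: fun_eq_iff midx_def)
  ultimately have "rel i0 (DL n m [0..<n] s (\<lambda>u. c u * Dmulti n m T (F i0) u)) c (\<lambda>i. T i + s i)"
    by (simp only:)
  then show ?thesis unfolding rel_def Dmulti_DL[symmetric] mabs_add by (simp add: add.assoc)
qed

end


context jsys
begin

lemma ell_step:
  assumes A: "smooth_jet n m A" and I: "finite I" and i0: "i0 < r"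
    and cx: "\<And>x. x \<in> I \<Longrightarrow> smooth_jet n m (c x)"
    and Tx: "\<And>x. x \<in> I \<Longrightarrow> midx n (T x)"
    and K: "\<And>x. x \<in> I \<Longrightarrow> jet_order n m (F i0) + mabs n (T x) = K"
    and X: "smooth_jet n m XX"
    and XW: "(\<lambda>u. XX u - (\<Sum>x\<in>I. c x u * Dmulti n m (T x) (F i0) u)) \<in> W (int K - 1)"
  shows "(\<lambda>u. ell n m j A XX u - (\<Sum>x\<in>I. \<Sum>s\<in>{s. midx n s \<and> mabs n s = jet_order n m A}.
            (pd (P j s) A u * c x u) * Dmulti n m (\<lambda>i. T x i + s i) (F i0) u))
         \<in> W (int (K + jet_order n m A) - 1)"
proof -
  define oA where "oA = jet_order n m A"
  define MS where "MS = {s. midx n s \<and> mabs n s \<le> oA}"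
  have fMS: "finite MS" unfolding MS_def by (rule finite_MS)
  define g where "g x = (\<lambda>u. c x u * Dmulti n m (T x) (F i0) u)" for x
  define Y where "Y = (\<lambda>u. \<Sum>x\<in>I. g x u)"
  define Z where "Z = (\<lambda>u. XX u - Y u)"
  have sg: "x \<in> I \<Longrightarrow> smooth_jet n m (g x)" for x
    unfolding g_def using cx smF[OF i0] by (intro sj_mult sj_Dmulti) auto
  have sY: "smooth_jet n m Y" unfolding Y_def using sg I by (intro sj_sum) auto
  have ZW: "Z \<in> W (int K - 1)" using XW unfolding Z_def Y_def g_def .
  have sZ: "smooth_jet n m Z" using ZW by (rule W_sj)
  have Xe: "XX = (\<lambda>u. Y u + Z u)" unfolding Z_def by simp
  have DX: "Dmulti n m s XX u = (\<Sum>x\<in>I. Dmulti n m s (g x) u) + Dmulti n m s Z u" for s u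
  proof -
    have "Dmulti n m s XX u = Dmulti n m s Y u + Dmulti n m s Z u"
      unfolding Xe Dmulti_add[OF sY sZ] ..
    moreover have "Dmulti n m s Y = (\<lambda>u. \<Sum>x\<in>I. Dmulti n m s (g x) u)"
      unfolding Y_def by (rule Dmulti_sum[OF I sg])
    ultimately show ?thesis by simp
  qed
  define H where "H s u = pd (P j s) A u * Dmulti n m s Z u +
     (\<Sum>x\<in>I. pd (P j s) A u * (Dmulti n m s (g x) u -
        (if mabs n s = oA then c x u * Dmulti n m (\<lambda>i. T x i + s i) (F i0) u else 0)))" for s u
  have eq: "ell n m j A XX u - (\<Sum>x\<in>I. \<Sum>s\<in>{s. midx n s \<and> mabs n s = jet_order n m A}.
            (pd (P j s) A u * c x u) * Dmulti n m (\<lambda>i. T x i + s i) (F i0) u)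
      = (\<Sum>s\<in>MS. H s u)" for u
  proof -
    have seq: "{s. midx n s \<and> mabs n s = jet_order n m A} = {s \<in> MS. mabs n s = oA}"
      unfolding MS_def oA_def by auto
    have "(\<Sum>x\<in>I. \<Sum>s\<in>{s. midx n s \<and> mabs n s = jet_order n m A}.
            (pd (P j s) A u * c x u) * Dmulti n m (\<lambda>i. T x i + s i) (F i0) u)
        = (\<Sum>x\<in>I. \<Sum>s\<in>MS. if mabs n s = oA then
            (pd (P j s) A u * c x u) * Dmulti n m (\<lambda>i. T x i + s i) (F i0) u else 0)"
      unfolding seq by (simp add: sum.inter_filter[OF fMS])
    also have "\<dots> = (\<Sum>s\<in>MS. \<Sum>x\<in>I. if mabs n s = oA then
            (pd (P j s) A u * c x u) * Dmulti n m (\<lambda>i. T x i + s i) (F i0) u else 0)"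
      by (rule sum.swap)
    finally have t: "(\<Sum>x\<in>I. \<Sum>s\<in>{s. midx n s \<and> mabs n s = jet_order n m A}.
            (pd (P j s) A u * c x u) * Dmulti n m (\<lambda>i. T x i + s i) (F i0) u)
        = (\<Sum>s\<in>MS. \<Sum>x\<in>I. if mabs n s = oA then
            (pd (P j s) A u * c x u) * Dmulti n m (\<lambda>i. T x i + s i) (F i0) u else 0)" .
    have l: "ell n m j A XX u = (\<Sum>s\<in>MS. pd (P j s) A u * ((\<Sum>x\<in>I. Dmulti n m s (g x) u) + Dmulti n m s Z u))"
      unfolding ell_def MS_def oA_def DX ..
    have pt: "pd (P j s) A u * ((\<Sum>x\<in>I. Dmulti n m s (g x) u) + Dmulti n m s Z u)
       - (\<Sum>x\<in>I. if mabs n s = oA then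
            (pd (P j s) A u * c x u) * Dmulti n m (\<lambda>i. T x i + s i) (F i0) u else 0) = H s u" for s
      unfolding H_def by (cases "mabs n s = oA")
        (simp_all add: algebra_simps sum_distrib_left sum_subtractf sum.distrib)
    show ?thesis unfolding l t sum_subtractf[symmetric] pt ..
  qed
  have HW: "(\<lambda>u. H s u) \<in> W (int (K + oA) - 1)" if s: "s \<in> MS" for s
    unfolding H_def
  proof (rule W_add)
    have s': "midx n s" "mabs n s \<le> oA" using s by (auto simp: MS_def)
    have "Dmulti n m s Z \<in> W (int K - 1 + int (mabs n s))" by (rule W_Dmulti[OF ZW])
    then have "Dmulti n m s Z \<in> W (int (K + oA) - 1)" by (rule W_mono) (use s' in simp)
    then show "(\<lambda>u. pd (P j s) A u * Dmulti n m s Z u) \<in> W (int (K + oA) - 1)"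
      by (rule W_mult[OF sj_pd[OF A]])
    show "(\<lambda>u. \<Sum>x\<in>I. pd (P j s) A u * (Dmulti n m s (g x) u -
        (if mabs n s = oA then c x u * Dmulti n m (\<lambda>i. T x i + s i) (F i0) u else 0))) \<in> W (int (K + oA) - 1)"
    proof (rule W_sum[OF I], rule W_mult[OF sj_pd[OF A]])
      fix x assume x: "x \<in> I"
      show "(\<lambda>u. Dmulti n m s (g x) u -
        (if mabs n s = oA then c x u * Dmulti n m (\<lambda>i. T x i + s i) (F i0) u else 0)) \<in> W (int (K + oA) - 1)"
      proof (cases "mabs n s = oA")
        case True
        have "(\<lambda>u. Dmulti n m s (g x) u - c x u * Dmulti n m (\<lambda>i. T x i + s i) (F i0) u)
           \<in> W (int (jet_order n m (F i0) + mabs n (T x) + mabs n s) - 1)"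
          unfolding g_def by (rule leibniz[OF i0 Tx[OF x] s'(1) cx[OF x]])
        then show ?thesis using True K[OF x] by simp
      next
        case False
        then have lt: "mabs n s < oA" using s' by simp
        have "g x \<in> W (int K)" unfolding g_def
          by (rule W_basic[OF i0 Tx[OF x]]) (use K[OF x] cx[OF x] in auto)
        then have "Dmulti n m s (g x) \<in> W (int K + int (mabs n s))" by (rule W_Dmulti)
        then have "Dmulti n m s (g x) \<in> W (int (K + oA) - 1)" by (rule W_mono) (use lt in simp)
        then show ?thesis using False by simp
      qed
    qed
  qed
  have "(\<lambda>u. \<Sum>s\<in>MS. H s u) \<in> W (int (K + oA) - 1)" using HW fMS by (intro W_sum) auto
  moreover have "(\<lambda>u. ell n m j A XX u - (\<Sum>x\<in>I. \<Sum>s\<in>{s. midx n s \<and> mabs n s = jet_order n m A}.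
            (pd (P j s) A u * c x u) * Dmulti n m (\<lambda>i. T x i + s i) (F i0) u)) = (\<lambda>u. \<Sum>s\<in>MS. H s u)"
    by (rule ext) (rule eq)
  ultimately show ?thesis unfolding oA_def by simp
qed

end


lemma sum_PiE_insert:
  assumes k: "k \<notin> S"
  shows "(\<Sum>ts\<in>PiE (insert k S) T. f ts) = (\<Sum>g\<in>PiE S T. \<Sum>y\<in>T k. f (g(k := y)))"
proof -
  have "(\<Sum>ts\<in>PiE (insert k S) T. f ts) = (\<Sum>p\<in>T k \<times> PiE S T. f ((\<lambda>(y, g). g(k := y)) p))"
    unfolding PiE_insert_eq by (rule sum.reindex[OF inj_combinator[OF k], unfolded comp_def])
  also have "\<dots> = (\<Sum>y\<in>T k. \<Sum>g\<in>PiE S T. f (g(k := y)))"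
    by (simp add: sum.cartesian_product case_prod_unfold)
  also have "\<dots> = (\<Sum>g\<in>PiE S T. \<Sum>y\<in>T k. f (g(k := y)))"
    by (rule sum.swap)
  finally show ?thesis .
qed

lemma sj_ell: "smooth_jet n m A \<Longrightarrow> smooth_jet n m G \<Longrightarrow> smooth_jet n m (ell n m j A G)"
  unfolding ell_def by (intro sj_sum finite_MS sj_mult sj_pd sj_Dmulti)

lemma finite_MSeq: "finite {s. midx n s \<and> mabs n s = L}"
  by (rule finite_subset[OF _ finite_MS[of n L]]) auto

context jsys
begin

lemma iter:
  fixes \<zeta> \<nu> :: "nat \<Rightarrow> nat"
  assumes \<zeta>r: "\<And>j. j \<le> m \<Longrightarrow> \<zeta> j < r"
  shows "k \<le> m \<Longrightarrow> smooth_jet n m (foldr (\<lambda>k G. ell n m (\<nu> k) (F (\<zeta> k)) G) [k..<m] (F (\<zeta> m))) \<and>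
    (\<lambda>u. foldr (\<lambda>k G. ell n m (\<nu> k) (F (\<zeta> k)) G) [k..<m] (F (\<zeta> m)) u -
      (\<Sum>ts\<in>PiE {k..<m} (\<lambda>j. {s. midx n s \<and> mabs n s = jet_order n m (F (\<zeta> j))}).
         (\<Prod>j\<in>{k..<m}. pd (P (\<nu> j) (ts j)) (F (\<zeta> j)) u) *
         Dmulti n m (\<lambda>i. \<Sum>j\<in>{k..<m}. ts j i) (F (\<zeta> m)) u))
    \<in> W (int (jet_order n m (F (\<zeta> m)) + (\<Sum>j\<in>{k..<m}. jet_order n m (F (\<zeta> j)))) - 1)"
proof (induction k rule: inc_induct)
  case base
  have "(\<lambda>u. F (\<zeta> m) u - F (\<zeta> m) u) = (\<lambda>u. 0)" by simp
  then show ?case using smF[OF \<zeta>r[of m]] W_zero by (simp add: Dmulti_zero_idx)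
next
  case (step k)
  define Sk where "Sk j = {s. midx n s \<and> mabs n s = jet_order n m (F (\<zeta> j))}" for j
  define S' where "S' = {Suc k..<m}"
  define X' where "X' = foldr (\<lambda>k G. ell n m (\<nu> k) (F (\<zeta> k)) G) [Suc k..<m] (F (\<zeta> m))"
  define c where "c g = (\<lambda>u. \<Prod>j\<in>S'. pd (P (\<nu> j) (g j)) (F (\<zeta> j)) u)" for g :: "nat \<Rightarrow> nat \<Rightarrow> nat"
  define T where "T g = (\<lambda>i. \<Sum>j\<in>S'. g j i)" for g :: "nat \<Rightarrow> nat \<Rightarrow> nat"
  define K where "K = jet_order n m (F (\<zeta> m)) + (\<Sum>j\<in>S'. jet_order n m (F (\<zeta> j)))"
  have IH1: "smooth_jet n m X'" and IH2: "(\<lambda>u. X' u - (\<Sum>g\<in>PiE S' Sk. c g u * Dmulti n m (T g) (F (\<zeta> m)) u))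
      \<in> W (int K - 1)"
    using step.IH unfolding X'_def S'_def Sk_def c_def T_def K_def by auto
  have A: "smooth_jet n m (F (\<zeta> k))" using step.hyps by (intro smF \<zeta>r) simp
  have i0: "\<zeta> m < r" by (rule \<zeta>r) simp
  have fI: "finite (PiE S' Sk)" unfolding Sk_def S'_def by (intro finite_PiE finite_MSeq) auto
  have cx: "smooth_jet n m (c g)" for g
    unfolding c_def S'_def using \<zeta>r by (intro sj_prod sj_pd smF) auto
  have Tx: "midx n (T g)" if "g \<in> PiE S' Sk" for g
    using that unfolding T_def Sk_def midx_def by (auto simp: PiE_iff)
  have Kx: "jet_order n m (F (\<zeta> m)) + mabs n (T g) = K" if "g \<in> PiE S' Sk" for g
  proof -
    have "mabs n (T g) = (\<Sum>j\<in>S'. mabs n (g j))"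
      unfolding T_def mabs_def by (rule sum.swap)
    also have "\<dots> = (\<Sum>j\<in>S'. jet_order n m (F (\<zeta> j)))"
      using that by (intro sum.cong) (auto simp: PiE_iff Sk_def)
    finally show ?thesis unfolding K_def by simp
  qed
  have R: "(\<lambda>u. ell n m (\<nu> k) (F (\<zeta> k)) X' u - (\<Sum>g\<in>PiE S' Sk. \<Sum>s\<in>{s. midx n s \<and> mabs n s = jet_order n m (F (\<zeta> k))}.
            (pd (P (\<nu> k) s) (F (\<zeta> k)) u * c g u) * Dmulti n m (\<lambda>i. T g i + s i) (F (\<zeta> m)) u))
         \<in> W (int (K + jet_order n m (F (\<zeta> k))) - 1)"
    by (rule ell_step[OF A fI i0 cx Tx Kx IH1 IH2])
  have kS: "k \<notin> S'" and ins: "{k..<m} = insert k S'" using step.hyps by (auto simp: S'_def)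
  have fS: "finite S'" by (simp add: S'_def)
  have sumeq: "(\<Sum>ts\<in>PiE {k..<m} Sk. (\<Prod>j\<in>{k..<m}. pd (P (\<nu> j) (ts j)) (F (\<zeta> j)) u) *
         Dmulti n m (\<lambda>i. \<Sum>j\<in>{k..<m}. ts j i) (F (\<zeta> m)) u)
      = (\<Sum>g\<in>PiE S' Sk. \<Sum>s\<in>{s. midx n s \<and> mabs n s = jet_order n m (F (\<zeta> k))}.
            (pd (P (\<nu> k) s) (F (\<zeta> k)) u * c g u) * Dmulti n m (\<lambda>i. T g i + s i) (F (\<zeta> m)) u)" for u
    unfolding ins sum_PiE_insert[OF kS]
  proof (intro sum.cong refl)
    fix g s assume g: "g \<in> PiE S' Sk"
    have p: "(\<Prod>j\<in>insert k S'. pd (P (\<nu> j) ((g(k := s)) j)) (F (\<zeta> j)) u) = pd (P (\<nu> k) s) (F (\<zeta> k)) u * c g u"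
    proof -
      have "(\<Prod>j\<in>S'. pd (P (\<nu> j) ((g(k := s)) j)) (F (\<zeta> j)) u) = (\<Prod>j\<in>S'. pd (P (\<nu> j) (g j)) (F (\<zeta> j)) u)"
        using kS by (intro prod.cong) auto
      then show ?thesis unfolding c_def using kS fS by (simp add: prod.insert)
    qed
    have t: "(\<lambda>i. \<Sum>j\<in>insert k S'. (g(k := s)) j i) = (\<lambda>i. T g i + s i)"
      unfolding T_def using kS fS by (auto simp: sum.insert fun_eq_iff intro!: sum.cong)
    show "(\<Prod>j\<in>insert k S'. pd (P (\<nu> j) ((g(k := s)) j)) (F (\<zeta> j)) u) *
         Dmulti n m (\<lambda>i. \<Sum>j\<in>insert k S'. (g(k := s)) j i) (F (\<zeta> m)) u =
         pd (P (\<nu> k) s) (F (\<zeta> k)) u * c g u * Dmulti n m (\<lambda>i. T g i + s i) (F (\<zeta> m)) u"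
      unfolding p t ..
  qed (simp add: Sk_def)
  have fold: "foldr (\<lambda>k G. ell n m (\<nu> k) (F (\<zeta> k)) G) [k..<m] (F (\<zeta> m)) = ell n m (\<nu> k) (F (\<zeta> k)) X'"
    unfolding X'_def using step.hyps by (simp add: upt_conv_Cons)
  have Keq: "K + jet_order n m (F (\<zeta> k)) = jet_order n m (F (\<zeta> m)) + (\<Sum>j\<in>{k..<m}. jet_order n m (F (\<zeta> j)))"
    unfolding K_def ins using kS fS by simp
  show ?case unfolding fold
  proof
    show "smooth_jet n m (ell n m (\<nu> k) (F (\<zeta> k)) X')" by (rule sj_ell[OF A IH1])
    show "(\<lambda>u. ell n m (\<nu> k) (F (\<zeta> k)) X' u -
      (\<Sum>ts\<in>PiE {k..<m} (\<lambda>j. {s. midx n s \<and> mabs n s = jet_order n m (F (\<zeta> j))}).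
         (\<Prod>j\<in>{k..<m}. pd (P (\<nu> j) (ts j)) (F (\<zeta> j)) u) *
         Dmulti n m (\<lambda>i. \<Sum>j\<in>{k..<m}. ts j i) (F (\<zeta> m)) u))
    \<in> W (int (jet_order n m (F (\<zeta> m)) + (\<Sum>j\<in>{k..<m}. jet_order n m (F (\<zeta> j)))) - 1)"
      using R unfolding Sk_def[symmetric] sumeq Keq .
  qed
qed

end


lemma sign_div: "(of_int (sign z) / of_int (sign v) :: real) = of_int (sign z * sign v)"
  by (cases v rule: sign_cases) simp_all

theorem mainTheorem7:
  fixes n m r :: nat and F :: "nat \<Rightarrow> jetfun"
  assumes "Suc m \<le> r"
    and "\<forall>i<r. smooth_jet n m (F i)"
  shows "(\<lambda>u. lead_bracket n m F u - multibracket n m F u)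
           \<in> Jideal n m r F (int (\<Sum>i\<le>m. jet_order n m (F i)) - 1)"
proof -
  interpret jsys n m r F using assms(2) by unfold_locales auto
  define L where "L = int (\<Sum>i\<le>m. jet_order n m (F i)) - 1"
  define PZ where "PZ = {\<zeta>. \<zeta> permutes {..<Suc m}}"
  define PN where "PN = {\<nu>. \<nu> permutes {..<m}}"
  define LT where "LT \<zeta> \<nu> u = (\<Sum>ts \<in> PiE {..<m} (\<lambda>k. {s. midx n s \<and> mabs n s = jet_order n m (F (\<zeta> k))}).
           (\<Prod>j<m. pd (P (\<nu> j) (ts j)) (F (\<zeta> j)) u) *
           Dmulti n m (\<lambda>i. \<Sum>k<m. ts k i) (F (\<zeta> m)) u)" for \<zeta> \<nu> :: "nat \<Rightarrow> nat" and u
  define MB where "MB \<zeta> \<nu> = foldr (\<lambda>k G. ell n m (\<nu> k) (F (\<zeta> k)) G) [0..<m] (F (\<zeta> m))"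
    for \<zeta> \<nu> :: "nat \<Rightarrow> nat"
  have key: "(\<lambda>u. LT \<zeta> \<nu> u - MB \<zeta> \<nu> u) \<in> W L" if z: "\<zeta> \<in> PZ" for \<zeta> \<nu>
  proof -
    have zp: "\<zeta> permutes {..<Suc m}" using z by (simp add: PZ_def)
    have zr: "\<zeta> j < r" if "j \<le> m" for j
    proof -
      have "\<zeta> j \<in> {..<Suc m}" using permutes_in_image[OF zp] that by simp
      then show ?thesis using assms(1) by simp
    qed
    have it: "(\<lambda>u. MB \<zeta> \<nu> u - LT \<zeta> \<nu> u)
      \<in> W (int (jet_order n m (F (\<zeta> m)) + (\<Sum>j\<in>{0..<m}. jet_order n m (F (\<zeta> j)))) - 1)"
      using iter[of \<zeta> 0 \<nu>, OF zr] unfolding MB_def LT_def atLeast0LessThan by simp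
    have "jet_order n m (F (\<zeta> m)) + (\<Sum>j\<in>{0..<m}. jet_order n m (F (\<zeta> j)))
        = (\<Sum>j<Suc m. jet_order n m (F (\<zeta> j)))"
      by (simp add: atLeast0LessThan)
    also have "\<dots> = (\<Sum>i<Suc m. jet_order n m (F i))"
      using sum.reindex_bij_betw[OF permutes_imp_bij[OF zp], of "\<lambda>i. jet_order n m (F i)"] by simp
    also have "\<dots> = (\<Sum>i\<le>m. jet_order n m (F i))" by (simp add: lessThan_Suc_atMost)
    finally have "(\<lambda>u. MB \<zeta> \<nu> u - LT \<zeta> \<nu> u) \<in> W L" using it unfolding L_def by simp
    from W_scale[OF this, of "-1"] show ?thesis by simp
  qed
  have lead: "lead_bracket n m F u = (1 / fact m) * (\<Sum>\<zeta>\<in>PZ. \<Sum>\<nu>\<in>PN. of_int (sign \<zeta> * sign \<nu>) * LT \<zeta> \<nu> u)" for u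
    unfolding lead_bracket_def LT_def PZ_def PN_def sign_div ..
  have multi: "multibracket n m F u = (1 / fact m) * (\<Sum>\<zeta>\<in>PZ. \<Sum>\<nu>\<in>PN. of_int (sign \<zeta> * sign \<nu>) * MB \<zeta> \<nu> u)" for u
    unfolding multibracket_def MB_def PZ_def PN_def
    by (subst sum.swap) (simp add: mult.commute)
  have eq: "(\<lambda>u. lead_bracket n m F u - multibracket n m F u) =
     (\<lambda>u. (1 / fact m) * (\<Sum>\<zeta>\<in>PZ. \<Sum>\<nu>\<in>PN. of_int (sign \<zeta> * sign \<nu>) * (LT \<zeta> \<nu> u - MB \<zeta> \<nu> u)))"
    unfolding lead multi by (simp add: right_diff_distrib sum_subtractf)
  have fin: "finite PZ" "finite PN" unfolding PZ_def PN_def by (auto intro: finite_permutations)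
  have "(\<lambda>u. (1 / fact m) * (\<Sum>\<zeta>\<in>PZ. \<Sum>\<nu>\<in>PN. of_int (sign \<zeta> * sign \<nu>) * (LT \<zeta> \<nu> u - MB \<zeta> \<nu> u))) \<in> W L"
    using key fin by (intro W_scale W_sum) auto
  then show ?thesis unfolding eq L_def .
qed


end
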